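(* Let $(A,\succ,\prec)$ be a Leibniz-dendriform algebra and $r\in A\otimes A$. If $r$ satisfies the Leibniz-dendriform Yang–Baxter equation $S(r)=0$ and $r+\tau(r)$ is invariant, then $(A,\succ,\prec,\Delta_{\succ,r},\Delta_{\prec,r})$ is a Leibniz-dendriform bialgebra (called quasi-triangular).
   Context: All vector spaces are finite-dimensional over a field $k$; $I$ the identity, $\tau(a\otimes b)=b\otimes a$. A Leibniz-dendriform algebra is a vector space $A$ with bilinear operations $\succ,\prec$ such that, with $x\circ y:=x\succ y+x\prec y$, for all $x,y,z\in A$: $(x\circ y)\succ z=x\succ(y\succ z)-y\succ(x\succ z)$, $y\prec(x\circ z)+(x\succ y)\prec z=x\succ(y\prec z)$, $x\prec(y\circ z)=(x\prec y)\prec z+y\succ(x\prec z)$. Write $x\odot y:=x\succ y+y\prec x$, $x\star y:=x\circ y+y\circ x$. For a binary operation $*$ let $L_*(x)y=x*y$, $R_*(x)y=y*x$; $L_\odot:=L_\succ+R_\prec$, $R_\odot:=R_\succ+L_\prec$, $L_\star:=L_\circ+R_\circ$. For $r=\sum_i a_i\otimes b_i$: $S(r):=\sum_{i,j}\big(a_i\otimes a_j\otimes (b_j\circ b_i)-a_i\otimes (b_i\odot a_j)\otimes b_j-(a_i\succ a_j)\otimes b_i\otimes b_j\big)$. An element $s\in A\otimes A$ is invariant if for all $x$: $(L_\odot(x)\otimes I-I\otimes R_\circ(x))s=0$ and $(L_\star(x)\otimes I-I\otimes R_\prec(x))\tau(s)=0$. Coboundary maps: $\Delta_{\succ,r}(x)=(L_\odot(x)\otimes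 I-I\otimes R_\circ(x))r$, $\Delta_{\prec,r}(x)=(L_\star(x)\otimes I-I\otimes R_\prec(x))\tau(r)$. A Leibniz-dendriform bialgebra is $(A,\succ,\prec,\Delta_\succ,\Delta_\prec)$ with $(A,\succ,\prec)$ a Leibniz-dendriform algebra and linear $\Delta_\succ,\Delta_\prec:A\to A\otimes A$ such that, with $\Delta:=\Delta_\succ+\Delta_\prec$ and $\Delta_\odot:=\Delta_\succ+\tau\Delta_\prec$: $(\Delta\otimes I)\Delta_\succ=(I\otimes\Delta_\succ)\Delta_\succ-(\tau\otimes I)(I\otimes\Delta_\succ)\Delta_\succ$; $(I\otimes\Delta_\prec)\Delta_\succ-(\Delta_\succ\otimes I)\Delta_\prec=(\tau\otimes I)(I\otimes\Delta)\Delta_\prec$; $(I\otimes\Delta)\Delta_\prec=(\Delta_\prec\otimes I)\Delta_\prec+(\tau\otimes I)(I\otimes\Delta_\prec)\Delta_\succ$; and for all $x,y\in A$: (B1) $\Delta(x\odot y)-(I\otimes L_\odot(x))\Delta(y)+\tau(I\otimes L_\odot(x))\Delta(y)+\tau(I\otimes R_\odot(y))\Delta_\succ(x)-(I\otimes R_\odot(y))\Delta_\succ(x)=0$; (B2) $\Delta(x\succ y)-(L_\succ(x)\otimes I+I\otimes L_\succ(x))\Delta(y)-(I\otimes R_\succ(y))\Delta_\odot(x)+\tau(I\otimes R_\odot(y))\Delta_\odot(x)=0$; (B3) $(I\otimes R_\succ(y))\tau\Delta_\prec(x)-(R_\prec(x)\otimes I)\Delta(y)=0$; (B4) $(\Delta_\succ+\tau\Delta_\prec)(x\circ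 y)-(I\otimes L_\circ(x)+L_\succ(x)\otimes I)\Delta_\odot(y)+(I\otimes L_\circ(y)+L_\succ(y)\otimes I)\Delta_\odot(x)=0$; (B5) $\Delta_\succ(x\circ y)-(I\otimes R_\circ(y))\Delta_\succ(x)-(I\otimes L_\circ(x)+L_\odot(x)\otimes I)\Delta_\succ(y)+(L_\odot(y)\otimes I)\Delta_\odot(x)=0$; (B6) $(I\otimes R_\circ(y))\tau\Delta_\prec(x)-(R_\prec(x)\otimes I)\Delta_\succ(y)=0$. *)

theory Defs
  imports Main "HOL-Library.Function_Algebras"
begin

text \<open>A finite-dimensional vector space A over a field 'k is modelled
  as the coordinate space 'i \<Rightarrow> 'k over a finite basis index type 'i.
  A \<otimes> A is 'i \<times> 'i \<Rightarrow> 'k and A \<otimes> A \<otimes> A is 'i \<times> 'i \<times> 'i \<Rightarrow> 'k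
  (coefficients with respect to the tensor basis).\<close>

definition ev :: "'i \<Rightarrow> 'i \<Rightarrow> 'k::zero_neq_one" where
  "ev i = (\<lambda>j. if j = i then 1 else 0)"

definition smul :: "'k::times \<Rightarrow> ('j \<Rightarrow> 'k) \<Rightarrow> ('j \<Rightarrow> 'k)" where
  "smul c x = (\<lambda>j. c * x j)"

definition bilinear_op :: "(('i \<Rightarrow> 'k::field) \<Rightarrow> ('i \<Rightarrow> 'k) \<Rightarrow> ('i \<Rightarrow> 'k)) \<Rightarrow> bool" where
  "bilinear_op f \<longleftrightarrow>
     (\<forall>x y z. f (x + y) z = f x z + f y z) \<and>
     (\<forall>x y z. f x (y + z) = f x y + f x z) \<and>
     (\<forall>c x y. f (smul c x) y = smul c (f x y)) \<and>
     (\<forall>c x y. f x (smul c y) = smul c (f x y))"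

definition linear_map :: "(('i \<Rightarrow> 'k::field) \<Rightarrow> ('j \<Rightarrow> 'k)) \<Rightarrow> bool" where
  "linear_map f \<longleftrightarrow> (\<forall>x y. f (x + y) = f x + f y) \<and> (\<forall>c x. f (smul c x) = smul c (f x))"

definition tens2 :: "('i \<Rightarrow> 'k::times) \<Rightarrow> ('i \<Rightarrow> 'k) \<Rightarrow> ('i \<times> 'i \<Rightarrow> 'k)" where
  "tens2 x y = (\<lambda>(a, b). x a * y b)"

definition tens3 :: "('i \<Rightarrow> 'k::times) \<Rightarrow> ('i \<Rightarrow> 'k) \<Rightarrow> ('i \<Rightarrow> 'k) \<Rightarrow> ('i \<times> 'i \<times> 'i \<Rightarrow> 'k)" where
  "tens3 x y z = (\<lambda>(a, b, c). x a * y b * z c)"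

definition tens21 :: "('i \<times> 'i \<Rightarrow> 'k::times) \<Rightarrow> ('i \<Rightarrow> 'k) \<Rightarrow> ('i \<times> 'i \<times> 'i \<Rightarrow> 'k)" where
  "tens21 t z = (\<lambda>(a, b, c). t (a, b) * z c)"

definition tens12 :: "('i \<Rightarrow> 'k::times) \<Rightarrow> ('i \<times> 'i \<Rightarrow> 'k) \<Rightarrow> ('i \<times> 'i \<times> 'i \<Rightarrow> 'k)" where
  "tens12 x t = (\<lambda>(a, b, c). x a * t (b, c))"

text \<open>(f \<otimes> g) t for linear f g : A \<rightarrow> A.\<close>
definition map2 :: "(('i::finite \<Rightarrow> 'k::field) \<Rightarrow> ('i \<Rightarrow> 'k)) \<Rightarrow> (('i \<Rightarrow> 'k) \<Rightarrow> ('i \<Rightarrow> 'k))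
    \<Rightarrow> ('i \<times> 'i \<Rightarrow> 'k) \<Rightarrow> ('i \<times> 'i \<Rightarrow> 'k)" where
  "map2 f g t = (\<Sum>c\<in>UNIV. \<Sum>d\<in>UNIV. smul (t (c, d)) (tens2 (f (ev c)) (g (ev d))))"

text \<open>(D \<otimes> I) t and (I \<otimes> D) t for linear D : A \<rightarrow> A \<otimes> A.\<close>
definition mapD_I :: "(('i::finite \<Rightarrow> 'k::field) \<Rightarrow> ('i \<times> 'i \<Rightarrow> 'k))
    \<Rightarrow> ('i \<times> 'i \<Rightarrow> 'k) \<Rightarrow> ('i \<times> 'i \<times> 'i \<Rightarrow> 'k)" where
  "mapD_I D t = (\<Sum>c\<in>UNIV. \<Sum>d\<in>UNIV. smul (t (c, d)) (tens21 (D (ev c)) (ev d)))"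

definition mapI_D :: "(('i::finite \<Rightarrow> 'k::field) \<Rightarrow> ('i \<times> 'i \<Rightarrow> 'k))
    \<Rightarrow> ('i \<times> 'i \<Rightarrow> 'k) \<Rightarrow> ('i \<times> 'i \<times> 'i \<Rightarrow> 'k)" where
  "mapI_D D t = (\<Sum>c\<in>UNIV. \<Sum>d\<in>UNIV. smul (t (c, d)) (tens12 (ev c) (D (ev d))))"

definition tau :: "('i \<times> 'i \<Rightarrow> 'k) \<Rightarrow> ('i \<times> 'i \<Rightarrow> 'k)" where
  "tau t = (\<lambda>(a, b). t (b, a))"

definition tau12 :: "('i \<times> 'i \<times> 'i \<Rightarrow> 'k) \<Rightarrow> ('i \<times> 'i \<times> 'i \<Rightarrow> 'k)" where
  "tau12 T = (\<lambda>(a, b, c). T (b, a, c))"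

type_synonym ('i, 'k) binop = "('i \<Rightarrow> 'k) \<Rightarrow> ('i \<Rightarrow> 'k) \<Rightarrow> ('i \<Rightarrow> 'k)"

definition circ_op :: "('i, 'k::field) binop \<Rightarrow> ('i, 'k) binop \<Rightarrow> ('i, 'k) binop" where
  "circ_op sc pr x y = sc x y + pr x y"

definition odot_op :: "('i, 'k::field) binop \<Rightarrow> ('i, 'k) binop \<Rightarrow> ('i, 'k) binop" where
  "odot_op sc pr x y = sc x y + pr y x"

definition star_op :: "('i, 'k::field) binop \<Rightarrow> ('i, 'k) binop \<Rightarrow> ('i, 'k) binop" where
  "star_op sc pr x y = circ_op sc pr x y + circ_op sc pr y x"

definition Lm :: "('i, 'k) binop \<Rightarrow> ('i \<Rightarrow> 'k) \<Rightarrow> ('i \<Rightarrow> 'k) \<Rightarrow> ('i \<Rightarrow> 'k)" where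
  "Lm m x = (\<lambda>y. m x y)"

definition Rm :: "('i, 'k) binop \<Rightarrow> ('i \<Rightarrow> 'k) \<Rightarrow> ('i \<Rightarrow> 'k) \<Rightarrow> ('i \<Rightarrow> 'k)" where
  "Rm m x = (\<lambda>y. m y x)"

definition LD_algebra :: "('i, 'k::field) binop \<Rightarrow> ('i, 'k) binop \<Rightarrow> bool" where
  "LD_algebra sc pr \<longleftrightarrow> bilinear_op sc \<and> bilinear_op pr \<and>
    (\<forall>x y z.
      sc (circ_op sc pr x y) z = sc x (sc y z) - sc y (sc x z) \<and>
      pr y (circ_op sc pr x z) + pr (sc x y) z = sc x (pr y z) \<and>
      pr x (circ_op sc pr y z) = pr (pr x y) z + sc y (pr x z))"

definition S_YB :: "('i::finite, 'k::field) binop \<Rightarrow> ('i, 'k) binop \<Rightarrow> ('i \<times> 'i \<Rightarrow> 'k)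
    \<Rightarrow> ('i \<times> 'i \<times> 'i \<Rightarrow> 'k)" where
  "S_YB sc pr r = (\<Sum>p\<in>UNIV. \<Sum>q\<in>UNIV. smul (r p * r q)
      (tens3 (ev (fst p)) (ev (fst q)) (circ_op sc pr (ev (snd q)) (ev (snd p)))
     - tens3 (ev (fst p)) (odot_op sc pr (ev (snd p)) (ev (fst q))) (ev (snd q))
     - tens3 (sc (ev (fst p)) (ev (fst q))) (ev (snd p)) (ev (snd q))))"

definition invariant :: "('i::finite, 'k::field) binop \<Rightarrow> ('i, 'k) binop \<Rightarrow> ('i \<times> 'i \<Rightarrow> 'k) \<Rightarrow> bool" where
  "invariant sc pr s \<longleftrightarrow> (\<forall>x.
     map2 (Lm (odot_op sc pr) x) id s - map2 id (Rm (circ_op sc pr) x) s = 0 \<and>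
     map2 (Lm (star_op sc pr) x) id (tau s) - map2 id (Rm pr x) (tau s) = 0)"

definition Delta_succ :: "('i::finite, 'k::field) binop \<Rightarrow> ('i, 'k) binop \<Rightarrow> ('i \<times> 'i \<Rightarrow> 'k)
    \<Rightarrow> ('i \<Rightarrow> 'k) \<Rightarrow> ('i \<times> 'i \<Rightarrow> 'k)" where
  "Delta_succ sc pr r x = map2 (Lm (odot_op sc pr) x) id r - map2 id (Rm (circ_op sc pr) x) r"

definition Delta_prec :: "('i::finite, 'k::field) binop \<Rightarrow> ('i, 'k) binop \<Rightarrow> ('i \<times> 'i \<Rightarrow> 'k)
    \<Rightarrow> ('i \<Rightarrow> 'k) \<Rightarrow> ('i \<times> 'i \<Rightarrow> 'k)" where
  "Delta_prec sc pr r x = map2 (Lm (star_op sc pr) x) id (tau r) - map2 id (Rm pr x) (tau r)"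

definition LD_bialgebra :: "('i::finite, 'k::field) binop \<Rightarrow> ('i, 'k) binop
    \<Rightarrow> (('i \<Rightarrow> 'k) \<Rightarrow> ('i \<times> 'i \<Rightarrow> 'k)) \<Rightarrow> (('i \<Rightarrow> 'k) \<Rightarrow> ('i \<times> 'i \<Rightarrow> 'k)) \<Rightarrow> bool" where
  "LD_bialgebra sc pr Ds Dp \<longleftrightarrow>
    (let D = (\<lambda>x. Ds x + Dp x);
         Do = (\<lambda>x. Ds x + tau (Dp x));
         ci = circ_op sc pr; od = odot_op sc pr; st = star_op sc pr in
    LD_algebra sc pr \<and> linear_map Ds \<and> linear_map Dp \<and>
    (\<forall>x.
      mapD_I D (Ds x) = mapI_D Ds (Ds x) - tau12 (mapI_D Ds (Ds x)) \<and>
      mapI_D Dp (Ds x) - mapD_I Ds (Dp x) = tau12 (mapI_D D (Dp x)) \<and>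
      mapI_D D (Dp x) = mapD_I Dp (Dp x) + tau12 (mapI_D Dp (Ds x))) \<and>
    (\<forall>x y.
      D (od x y) - map2 id (Lm od x) (D y) + tau (map2 id (Lm od x) (D y))
        + tau (map2 id (Rm od y) (Ds x)) - map2 id (Rm od y) (Ds x) = 0 \<and>
      D (sc x y) - (map2 (Lm sc x) id (D y) + map2 id (Lm sc x) (D y))
        - map2 id (Rm sc y) (Do x) + tau (map2 id (Rm od y) (Do x)) = 0 \<and>
      map2 id (Rm sc y) (tau (Dp x)) - map2 (Rm pr x) id (D y) = 0 \<and>
      Do (ci x y) - (map2 id (Lm ci x) (Do y) + map2 (Lm sc x) id (Do y))
        + (map2 id (Lm ci y) (Do x) + map2 (Lm sc y) id (Do x)) = 0 \<and>
      Ds (ci x y) - map2 id (Rm ci y) (Ds x)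
        - (map2 id (Lm ci x) (Ds y) + map2 (Lm od x) id (Ds y))
        + map2 (Lm od y) id (Do x) = 0 \<and>
      map2 id (Rm ci y) (tau (Dp x)) - map2 (Rm pr x) id (Ds y) = 0))"

end

theory Submission
  imports Defs
begin

lemma sum_fun_apply: "(sum f A) x = (\<Sum>a\<in>A. f a x)"
  by (induction A rule: infinite_finite_induct) auto

lemma smul_apply [simp]: "smul c x j = c * x j" by (simp add: smul_def)
lemma smul_add: "smul (c::'k::field) (x + y) = smul c x + smul c y" by (rule ext) (simp add: algebra_simps)
lemma smul_diff: "smul (c::'k::field) (x - y) = smul c x - smul c y" by (rule ext) (simp add: algebra_simps)
lemma smul_zero [simp]: "smul (c::'k::field) 0 = 0" by (rule ext) simp
lemma smul_0 [simp]: "smul (0::'k::field) x = 0" by (rule ext) simp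
lemma smul_1 [simp]: "smul (1::'k::field) x = x" by (rule ext) simp
lemma smul_smul: "smul (a::'k::field) (smul b x) = smul (a * b) x" by (rule ext) (simp add: algebra_simps)
lemma smul_addc: "smul ((a::'k::field) + b) x = smul a x + smul b x" by (rule ext) (simp add: algebra_simps)
lemma smul_sum: "smul (c::'k::field) (sum f A) = (\<Sum>a\<in>A. smul c (f a))"
  by (rule ext) (simp add: sum_fun_apply sum_distrib_left)
lemma smul_sumc: "smul (sum f A :: 'k::field) x = (\<Sum>a\<in>A. smul (f a) x)"
  by (rule ext) (simp add: sum_fun_apply sum_distrib_right)

lemma tens2_apply [simp]: "tens2 x y (a, b) = x a * y b" by (simp add: tens2_def)
lemma tens3_apply [simp]: "tens3 x y z (a, b, c) = x a * y b * z c" by (simp add: tens3_def)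
lemma tens21_apply [simp]: "tens21 t z (a, b, c) = t (a, b) * z c" by (simp add: tens21_def)
lemma tens12_apply [simp]: "tens12 x t (a, b, c) = x a * t (b, c)" by (simp add: tens12_def)
lemma tau_apply [simp]: "tau t (a, b) = t (b, a)" by (simp add: tau_def)
lemma tau12_apply [simp]: "tau12 T (a, b, c) = T (b, a, c)" by (simp add: tau12_def)

lemma lin_add: "linear_map f \<Longrightarrow> f (x + y) = f x + f y"
  unfolding linear_map_def by blast
lemma lin_smul: "linear_map f \<Longrightarrow> f (smul c x) = smul c (f x)"
  unfolding linear_map_def by blast
lemma lin_zero: "linear_map (f :: ('i \<Rightarrow> 'k::field) \<Rightarrow> ('j \<Rightarrow> 'k)) \<Longrightarrow> f 0 = 0"
proof -
  assume l: "linear_map f"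
  have "f (smul 0 0) = smul 0 (f 0)" by (rule lin_smul[OF l])
  thus ?thesis by simp
qed
lemma lin_diff: "linear_map (f :: ('i \<Rightarrow> 'k::field) \<Rightarrow> ('j \<Rightarrow> 'k)) \<Longrightarrow> f (x - y) = f x - f y"
proof -
  assume l: "linear_map f"
  have "f (x - y) + f y = f x" using lin_add[OF l, of "x - y" y] by simp
  thus ?thesis by (simp add: eq_diff_eq)
qed
lemma lin_sum: "linear_map (f :: ('i \<Rightarrow> 'k::field) \<Rightarrow> ('j \<Rightarrow> 'k)) \<Longrightarrow> f (sum g A) = (\<Sum>a\<in>A. f (g a))"
  by (induction A rule: infinite_finite_induct) (auto simp: lin_zero lin_add)

lemma linear_mapI: "(\<And>x y. f (x + y) = f x + f y) \<Longrightarrow> (\<And>c x. f (smul c x) = smul c (f x)) \<Longrightarrow> linear_map f"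
  unfolding linear_map_def by blast

lemma basis_exp: "(u :: 'i::finite \<Rightarrow> 'k::field) = (\<Sum>c\<in>UNIV. smul (u c) (ev c))"
proof (rule ext)
  fix j
  have "(\<Sum>c\<in>UNIV. smul (u c) (ev c)) j = (\<Sum>c\<in>UNIV. u c * (if j = c then 1 else 0))"
    by (simp add: sum_fun_apply ev_def)
  also have "\<dots> = (\<Sum>c\<in>UNIV. if j = c then u c else 0)" by (rule sum.cong) auto
  also have "\<dots> = u j" by (simp add: sum.delta)
  finally show "u j = (\<Sum>c\<in>UNIV. smul (u c) (ev c)) j" by simp
qed

lemma lin_basis: "linear_map f \<Longrightarrow> f (u :: 'i::finite \<Rightarrow> 'k::field) = (\<Sum>c\<in>UNIV. smul (u c) (f (ev c)))"
proof -
  assume l: "linear_map f"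
  have "f u = f (\<Sum>c\<in>UNIV. smul (u c) (ev c))" by (simp only: basis_exp[of u, symmetric])
  also have "\<dots> = (\<Sum>c\<in>UNIV. smul (u c) (f (ev c)))" by (simp only: lin_sum[OF l] lin_smul[OF l])
  finally show ?thesis .
qed

definition bilin :: "(('i \<Rightarrow> 'k::field) \<Rightarrow> ('i \<Rightarrow> 'k) \<Rightarrow> ('j \<Rightarrow> 'k)) \<Rightarrow> bool" where
  "bilin H \<longleftrightarrow> (\<forall>x. linear_map (H x)) \<and> (\<forall>y. linear_map (\<lambda>x. H x y))"

definition trilin :: "(('i \<Rightarrow> 'k::field) \<Rightarrow> ('i \<Rightarrow> 'k) \<Rightarrow> ('i \<Rightarrow> 'k) \<Rightarrow> ('j \<Rightarrow> 'k)) \<Rightarrow> bool" where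
  "trilin H \<longleftrightarrow> (\<forall>x y. linear_map (H x y)) \<and> (\<forall>x z. linear_map (\<lambda>y. H x y z)) \<and> (\<forall>y z. linear_map (\<lambda>x. H x y z))"

definition L2 :: "(('i::finite \<Rightarrow> 'k::field) \<Rightarrow> ('i \<Rightarrow> 'k) \<Rightarrow> ('j \<Rightarrow> 'k)) \<Rightarrow> ('i \<times> 'i \<Rightarrow> 'k) \<Rightarrow> ('j \<Rightarrow> 'k)" where
  "L2 H T = (\<Sum>p\<in>UNIV. smul (T p) (H (ev (fst p)) (ev (snd p))))"

definition L3 :: "(('i::finite \<Rightarrow> 'k::field) \<Rightarrow> ('i \<Rightarrow> 'k) \<Rightarrow> ('i \<Rightarrow> 'k) \<Rightarrow> ('j \<Rightarrow> 'k)) \<Rightarrow> ('i \<times> 'i \<times> 'i \<Rightarrow> 'k) \<Rightarrow> ('j \<Rightarrow> 'k)" where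
  "L3 H T = (\<Sum>p\<in>UNIV. smul (T p) (H (ev (fst p)) (ev (fst (snd p))) (ev (snd (snd p)))))"

lemma L2_lin: "linear_map (L2 H)"
  by (rule linear_mapI) (simp_all add: L2_def smul_addc sum.distrib smul_sum smul_smul)

lemma L3_lin: "linear_map (L3 H)"
  by (rule linear_mapI) (simp_all add: L3_def smul_addc sum.distrib smul_sum smul_smul)

lemma L2_tens2:
  assumes "bilin H"
  shows "L2 H (tens2 u v) = H u v"
proof -
  have l1: "linear_map (\<lambda>x. H x y)" for y using assms by (simp add: bilin_def)
  have l2: "linear_map (H x)" for x using assms by (simp add: bilin_def)
  have "H u v = (\<Sum>c\<in>UNIV. smul (u c) (H (ev c) v))"
    using lin_basis[OF l1, where u=u] by simp
  also have "\<dots> = (\<Sum>c\<in>UNIV. smul (u c) (\<Sum>d\<in>UNIV. smul (v d) (H (ev c) (ev d))))"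
    by (simp only: lin_basis[OF l2, where u=v])
  also have "\<dots> = (\<Sum>c\<in>UNIV. \<Sum>d\<in>UNIV. smul (u c * v d) (H (ev c) (ev d)))"
    by (simp add: smul_sum smul_smul)
  also have "\<dots> = (\<Sum>p\<in>UNIV. smul (u (fst p) * v (snd p)) (H (ev (fst p)) (ev (snd p))))"
    by (simp add: sum.cartesian_product case_prod_beta)
  also have "\<dots> = L2 H (tens2 u v)"
    by (simp add: L2_def tens2_def case_prod_beta)
  finally show ?thesis by simp
qed

lemma L3_tens3:
  assumes "trilin H"
  shows "L3 H (tens3 u v w) = H u v w"
proof -
  have l1: "linear_map (\<lambda>x. H x y z)" for y z using assms by (simp add: trilin_def)
  have l2: "linear_map (\<lambda>y. H x y z)" for x z using assms by (simp add: trilin_def)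
  have l3: "linear_map (H x y)" for x y using assms by (simp add: trilin_def)
  have "H u v w = (\<Sum>a\<in>UNIV. smul (u a) (H (ev a) v w))"
    using lin_basis[OF l1, where u=u] by simp
  also have "\<dots> = (\<Sum>a\<in>UNIV. smul (u a) (\<Sum>b\<in>UNIV. smul (v b) (H (ev a) (ev b) w)))"
    by (simp only: lin_basis[OF l2, where u=v])
  also have "\<dots> = (\<Sum>a\<in>UNIV. smul (u a) (\<Sum>b\<in>UNIV. smul (v b) (\<Sum>c\<in>UNIV. smul (w c) (H (ev a) (ev b) (ev c)))))"
    by (simp only: lin_basis[OF l3, where u=w])
  also have "\<dots> = (\<Sum>a\<in>UNIV. \<Sum>b\<in>UNIV. \<Sum>c\<in>UNIV. smul (u a * v b * w c) (H (ev a) (ev b) (ev c)))"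
    by (simp add: smul_sum smul_smul mult.assoc)
  also have "\<dots> = (\<Sum>a\<in>UNIV. \<Sum>p\<in>UNIV. smul (u a * v (fst p) * w (snd p)) (H (ev a) (ev (fst p)) (ev (snd p))))"
    by (simp add: sum.cartesian_product case_prod_beta)
  also have "\<dots> = (\<Sum>q\<in>UNIV. smul (u (fst q) * v (fst (snd q)) * w (snd (snd q))) (H (ev (fst q)) (ev (fst (snd q))) (ev (snd (snd q)))))"
    by (simp add: sum.cartesian_product case_prod_beta)
  also have "\<dots> = L3 H (tens3 u v w)"
    by (simp add: L3_def tens3_def case_prod_beta)
  finally show ?thesis by simp
qed

lemma T3_ext: "(\<And>a b c. X (a, b, c) = Y (a, b, c)) \<Longrightarrow> X = Y"
  by (rule ext) auto
lemma T2_ext: "(\<And>a b. X (a, b) = Y (a, b)) \<Longrightarrow> X = Y"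
  by (rule ext) auto

locale LDA =
  fixes sc pr :: "('i::finite \<Rightarrow> 'k::field) \<Rightarrow> ('i \<Rightarrow> 'k) \<Rightarrow> ('i \<Rightarrow> 'k)"
  assumes bsc: "bilinear_op sc" and bpr: "bilinear_op pr"
begin

abbreviation "ci \<equiv> circ_op sc pr"
abbreviation "od \<equiv> odot_op sc pr"
abbreviation "st \<equiv> star_op sc pr"

lemma sc_lin1: "linear_map (\<lambda>x. sc x z)" using bsc unfolding bilinear_op_def linear_map_def by blast
lemma sc_lin2: "linear_map (sc x)" using bsc unfolding bilinear_op_def linear_map_def by blast
lemma pr_lin1: "linear_map (\<lambda>x. pr x z)" using bpr unfolding bilinear_op_def linear_map_def by blast
lemma pr_lin2: "linear_map (pr x)" using bpr unfolding bilinear_op_def linear_map_def by blast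

lemma sc_add1: "sc (x + y) z = sc x z + sc y z" using lin_add[OF sc_lin1] .
lemma sc_add2: "sc z (x + y) = sc z x + sc z y" using lin_add[OF sc_lin2] .
lemma sc_diff1: "sc (x - y) z = sc x z - sc y z" using lin_diff[OF sc_lin1] .
lemma sc_diff2: "sc z (x - y) = sc z x - sc z y" using lin_diff[OF sc_lin2] .
lemma pr_add1: "pr (x + y) z = pr x z + pr y z" using lin_add[OF pr_lin1] .
lemma pr_add2: "pr z (x + y) = pr z x + pr z y" using lin_add[OF pr_lin2] .
lemma pr_diff1: "pr (x - y) z = pr x z - pr y z" using lin_diff[OF pr_lin1] .
lemma pr_diff2: "pr z (x - y) = pr z x - pr z y" using lin_diff[OF pr_lin2] .
lemma sc_smul1: "sc (smul c x) z = smul c (sc x z)" using lin_smul[OF sc_lin1] .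
lemma sc_smul2: "sc z (smul c x) = smul c (sc z x)" using lin_smul[OF sc_lin2] .
lemma pr_smul1: "pr (smul c x) z = smul c (pr x z)" using lin_smul[OF pr_lin1] .
lemma pr_smul2: "pr z (smul c x) = smul c (pr z x)" using lin_smul[OF pr_lin2] .

lemmas bil_simps = sc_add1 sc_add2 sc_diff1 sc_diff2 pr_add1 pr_add2 pr_diff1 pr_diff2
  circ_op_def odot_op_def star_op_def

definition dsT where "dsT x a b = tens2 (od x a) b - tens2 a (ci b x)"
definition dpT where "dpT x a b = tens2 a (pr b x) - tens2 (st x a) b"
definition dT where "dT x a b = dsT x a b + dpT x a b"
definition sH :: "(('i \<Rightarrow> 'k) \<Rightarrow> ('i \<Rightarrow> 'k) \<Rightarrow> ('i \<Rightarrow> 'k) \<Rightarrow> ('j \<Rightarrow> 'k)) \<Rightarrow> ('i \<Rightarrow> 'k) \<Rightarrow> ('i \<Rightarrow> 'k) \<Rightarrow> ('i \<Rightarrow> 'k) \<Rightarrow> ('i \<Rightarrow> 'k) \<Rightarrow> ('j \<Rightarrow> 'k)"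
  where "sH H a b c d = H a c (ci d b) - H a (od b c) d - H (sc a c) b d"
definition gH0 :: "(('i \<Rightarrow> 'k) \<Rightarrow> ('i \<Rightarrow> 'k) \<Rightarrow> ('j \<Rightarrow> 'k)) \<Rightarrow> ('i \<Rightarrow> 'k) \<Rightarrow> ('i \<Rightarrow> 'k) \<Rightarrow> ('i \<Rightarrow> 'k) \<Rightarrow> ('j \<Rightarrow> 'k)"
  where "gH0 H u a b = H (od u a) b - H a (ci b u) + (H (od u b) a - H b (ci a u))"
definition gH1 :: "(('i \<Rightarrow> 'k) \<Rightarrow> ('i \<Rightarrow> 'k) \<Rightarrow> ('j \<Rightarrow> 'k)) \<Rightarrow> ('i \<Rightarrow> 'k) \<Rightarrow> ('i \<Rightarrow> 'k) \<Rightarrow> ('i \<Rightarrow> 'k) \<Rightarrow> ('j \<Rightarrow> 'k)"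
  where "gH1 H u a b = H (st u a) b - H a (pr b u) + (H (st u b) a - H b (pr a u))"
definition AX1 where "AX1 u v w = sc (ci u v) w - (sc u (sc v w) - sc v (sc u w))"
definition AX2 where "AX2 u v w = pr v (ci u w) + pr (sc u v) w - sc u (pr v w)"
definition AX3 where "AX3 u v w = pr u (ci v w) - (pr (pr u v) w + sc v (pr u w))"

lemmas tw_simps = bil_simps dsT_def dpT_def dT_def sH_def gH0_def gH1_def AX1_def AX2_def AX3_def
  tens2_apply tens3_apply tens21_apply tens12_apply tau_apply tau12_apply plus_fun_apply minus_apply smul_apply

end

definition Rsum :: "('i::finite \<times> 'i \<Rightarrow> 'k::field) \<Rightarrow> (('i \<Rightarrow> 'k) \<Rightarrow> ('i \<Rightarrow> 'k) \<Rightarrow> ('j \<Rightarrow> 'k)) \<Rightarrow> ('j \<Rightarrow> 'k)" where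
  "Rsum r \<Phi> = (\<Sum>p\<in>UNIV. smul (r p) (\<Phi> (ev (fst p)) (ev (snd p))))"

lemma Rsum_cong: "(\<And>a b. \<Phi> a b = \<Psi> a b) \<Longrightarrow> Rsum r \<Phi> = Rsum r \<Psi>"
  by (simp add: Rsum_def)

lemma Rsum_add: "Rsum r \<Phi> + Rsum r \<Psi> = Rsum r (\<lambda>a b. \<Phi> a b + \<Psi> a b)"
  by (simp add: Rsum_def smul_add sum.distrib)
lemma Rsum_diff: "Rsum r \<Phi> - Rsum r \<Psi> = Rsum r (\<lambda>a b. \<Phi> a b - \<Psi> a b)"
  by (simp add: Rsum_def smul_diff sum_subtractf)
lemma Rsum_add_dist: "Rsum r (\<lambda>a b. \<Phi> a b + \<Psi> a b) = Rsum r \<Phi> + Rsum r \<Psi>"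
  by (simp add: Rsum_add)
lemma Rsum_diff_dist: "Rsum r (\<lambda>a b. \<Phi> a b - \<Psi> a b) = Rsum r \<Phi> - Rsum r \<Psi>"
  by (simp add: Rsum_diff)
lemma Rsum_smul_dist: "Rsum r (\<lambda>a b. smul (c::'k::field) (\<Phi> a b)) = smul c (Rsum r \<Phi>)"
  by (simp add: Rsum_def smul_sum smul_smul mult.commute)
lemma Rsum_zero: "Rsum r (\<lambda>a b. 0) = 0"
  by (simp add: Rsum_def)
lemma Rsum_lin: "linear_map f \<Longrightarrow> f (Rsum r \<Phi>) = Rsum r (\<lambda>a b. f (\<Phi> a b))"
  unfolding Rsum_def by (simp only: lin_sum lin_smul)
lemma Rsum_plus_r: "Rsum (r + s) \<Phi> = Rsum r \<Phi> + Rsum s \<Phi>"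
  by (simp add: Rsum_def smul_addc sum.distrib)

lemma Rsum_tau: "Rsum (tau r) \<Phi> = Rsum r (\<lambda>a b. \<Phi> b a)"
proof -
  have "Rsum (tau r) \<Phi> = (\<Sum>p\<in>UNIV. smul (r (snd p, fst p)) (\<Phi> (ev (fst p)) (ev (snd p))))"
    by (simp add: Rsum_def tau_def case_prod_beta)
  also have "\<dots> = (\<Sum>p\<in>prod.swap ` UNIV. smul (r (snd p, fst p)) (\<Phi> (ev (fst p)) (ev (snd p))))"
    by simp
  also have "\<dots> = (\<Sum>p\<in>UNIV. smul (r p) (\<Phi> (ev (snd p)) (ev (fst p))))"
    by (subst sum.reindex) (auto simp: inj_on_def)
  finally show ?thesis by (simp add: Rsum_def)
qed

lemma Rsum_swap: "Rsum r (\<lambda>a b. Rsum r (\<lambda>c d. Z a b c d)) = Rsum r (\<lambda>c d. Rsum r (\<lambda>a b. Z a b c d))"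
  unfolding Rsum_def by (simp add: smul_sum smul_smul) (subst sum.swap, simp add: mult.commute)

lemma Rsum_map2: "map2 f g t = Rsum t (\<lambda>a b. tens2 (f a) (g b))"
  by (simp add: map2_def Rsum_def sum.cartesian_product case_prod_beta)

lemma map2_L2: "map2 f g t = L2 (\<lambda>u v. tens2 (f u) (g v)) t"
  by (simp add: map2_def L2_def sum.cartesian_product case_prod_beta)
lemma mapD_I_L2: "mapD_I D t = L2 (\<lambda>u v. tens21 (D u) v) t"
  by (simp add: mapD_I_def L2_def sum.cartesian_product case_prod_beta)
lemma mapI_D_L2: "mapI_D D t = L2 (\<lambda>u v. tens12 u (D v)) t"
  by (simp add: mapI_D_def L2_def sum.cartesian_product case_prod_beta)

lemma map2_lin: "linear_map (map2 f g)" by (simp add: map2_L2[abs_def] L2_lin)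
lemma mapD_I_lin: "linear_map (mapD_I D)" by (simp add: mapD_I_L2[abs_def] L2_lin)
lemma mapI_D_lin: "linear_map (mapI_D D)" by (simp add: mapI_D_L2[abs_def] L2_lin)
lemma tau_lin: "linear_map (tau :: ('i \<times> 'i \<Rightarrow> 'k::field) \<Rightarrow> _)"
  by (rule linear_mapI; rule T2_ext; simp)
lemma tau12_lin: "linear_map (tau12 :: ('i \<times> 'i \<times> 'i \<Rightarrow> 'k::field) \<Rightarrow> _)"
  by (rule linear_mapI; rule T3_ext; simp)
lemma tens21_lin: "linear_map (\<lambda>T. tens21 T (v :: 'i \<Rightarrow> 'k::field))"
  by (rule linear_mapI; rule T3_ext; simp add: algebra_simps)
lemma tens12_lin: "linear_map (\<lambda>T. tens12 (u :: 'i \<Rightarrow> 'k::field) T)"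
  by (rule linear_mapI; rule T3_ext; simp add: algebra_simps)
lemma tens21_lin2: "linear_map (\<lambda>v. tens21 (T :: 'i \<times> 'i \<Rightarrow> 'k::field) v)"
  by (rule linear_mapI; rule T3_ext; simp add: algebra_simps)
lemma tens12_lin1: "linear_map (\<lambda>u. tens12 u (T :: 'i \<times> 'i \<Rightarrow> 'k::field))"
  by (rule linear_mapI; rule T3_ext; simp add: algebra_simps)
lemma tens2_lin1: "linear_map (\<lambda>u. tens2 u (v :: 'i \<Rightarrow> 'k::field))"
  by (rule linear_mapI; rule T2_ext; simp add: algebra_simps)
lemma tens2_lin2: "linear_map (\<lambda>v. tens2 (u :: 'i \<Rightarrow> 'k::field) v)"
  by (rule linear_mapI; rule T2_ext; simp add: algebra_simps)
lemma tens3_lin1: "linear_map (\<lambda>u. tens3 u (v :: 'i \<Rightarrow> 'k::field) w)"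
  by (rule linear_mapI; rule T3_ext; simp add: algebra_simps)
lemma tens3_lin2: "linear_map (\<lambda>v. tens3 u v (w :: 'i \<Rightarrow> 'k::field))"
  by (rule linear_mapI; rule T3_ext; simp add: algebra_simps)
lemma tens3_lin3: "linear_map (\<lambda>w. tens3 u (v :: 'i \<Rightarrow> 'k::field) w)"
  by (rule linear_mapI; rule T3_ext; simp add: algebra_simps)

lemma lin_id: "linear_map (\<lambda>x. x)" by (rule linear_mapI) auto
lemma lin_id': "linear_map id" by (rule linear_mapI) auto
lemma lin_comp: assumes f: "linear_map f" and g: "linear_map g" shows "linear_map (\<lambda>x. f (g x))"
  by (rule linear_mapI) (simp_all only: lin_add[OF f] lin_smul[OF f] lin_add[OF g] lin_smul[OF g])
lemma lin_add_fun: assumes f: "linear_map f" and g: "linear_map g" shows "linear_map (\<lambda>x. f x + g x)"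
  by (rule linear_mapI) (simp_all only: lin_add[OF f] lin_smul[OF f] lin_add[OF g] lin_smul[OF g] smul_add add_ac)
lemma lin_diff_fun: assumes f: "linear_map (f :: ('i \<Rightarrow> 'k::field) \<Rightarrow> ('j \<Rightarrow> 'k))" and g: "linear_map g"
  shows "linear_map (\<lambda>x. f x - g x)"
  by (rule linear_mapI) (simp_all add: lin_add[OF f] lin_smul[OF f] lin_add[OF g] lin_smul[OF g] smul_diff algebra_simps)
lemma lin_Rsum_arg: assumes l: "\<And>a b. linear_map (\<lambda>x. \<Phi> x a b)" shows "linear_map (\<lambda>x. Rsum r (\<Phi> x))"
proof (rule linear_mapI)
  fix x y have "Rsum r (\<Phi> (x + y)) = Rsum r (\<lambda>a b. \<Phi> x a b + \<Phi> y a b)"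
    by (rule Rsum_cong) (rule lin_add[OF l])
  thus "Rsum r (\<Phi> (x + y)) = Rsum r (\<Phi> x) + Rsum r (\<Phi> y)" by (simp add: Rsum_add)
next
  fix c x have "Rsum r (\<Phi> (smul c x)) = Rsum r (\<lambda>a b. smul c (\<Phi> x a b))"
    by (rule Rsum_cong) (rule lin_smul[OF l])
  thus "Rsum r (\<Phi> (smul c x)) = smul c (Rsum r (\<Phi> x))" by (simp add: Rsum_smul_dist)
qed

lemma map2_tens2: "linear_map f \<Longrightarrow> linear_map g \<Longrightarrow> map2 f g (tens2 u v) = tens2 (f u) (g v)"
  unfolding map2_L2 by (rule L2_tens2) (simp add: bilin_def lin_comp[OF tens2_lin1] lin_comp[OF tens2_lin2])
lemma mapD_I_tens2: "linear_map D \<Longrightarrow> mapD_I D (tens2 u v) = tens21 (D u) v"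
  unfolding mapD_I_L2 by (rule L2_tens2) (simp add: bilin_def lin_comp[OF tens21_lin] tens21_lin2)
lemma mapI_D_tens2: "linear_map D \<Longrightarrow> mapI_D D (tens2 u v) = tens12 u (D v)"
  unfolding mapI_D_L2 by (rule L2_tens2) (simp add: bilin_def lin_comp[OF tens12_lin] tens12_lin1)

lemma tens3_zero1 [simp]: "tens3 0 v w = (0 :: 'i \<times> 'i \<times> 'i \<Rightarrow> 'k::field)" by (rule T3_ext) simp
lemma tens3_zero2 [simp]: "tens3 u 0 w = (0 :: 'i \<times> 'i \<times> 'i \<Rightarrow> 'k::field)" by (rule T3_ext) simp
lemma tens3_zero3 [simp]: "tens3 u v 0 = (0 :: 'i \<times> 'i \<times> 'i \<Rightarrow> 'k::field)" by (rule T3_ext) simp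
lemma tens2_zero1 [simp]: "tens2 0 v = (0 :: 'i \<times> 'i \<Rightarrow> 'k::field)" by (rule T2_ext) simp
lemma tens2_zero2 [simp]: "tens2 u 0 = (0 :: 'i \<times> 'i \<Rightarrow> 'k::field)" by (rule T2_ext) simp

lemma lin_tens2_1: "linear_map f \<Longrightarrow> linear_map (\<lambda>x. tens2 (f x) (v :: 'i \<Rightarrow> 'k::field))"
  by (rule lin_comp[OF tens2_lin1])
lemma lin_tens2_2: "linear_map f \<Longrightarrow> linear_map (\<lambda>x. tens2 (u :: 'i \<Rightarrow> 'k::field) (f x))"
  by (rule lin_comp[OF tens2_lin2])

lemma map2_Rsum: "map2 f g (Rsum r \<Phi>) = Rsum r (\<lambda>a b. map2 f g (\<Phi> a b))" by (rule Rsum_lin[OF map2_lin])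
lemma mapD_I_Rsum: "mapD_I D (Rsum r \<Phi>) = Rsum r (\<lambda>a b. mapD_I D (\<Phi> a b))" by (rule Rsum_lin[OF mapD_I_lin])
lemma mapI_D_Rsum: "mapI_D D (Rsum r \<Phi>) = Rsum r (\<lambda>a b. mapI_D D (\<Phi> a b))" by (rule Rsum_lin[OF mapI_D_lin])
lemma tau_Rsum: "tau (Rsum r \<Phi>) = Rsum r (\<lambda>a b. tau (\<Phi> a b))" by (rule Rsum_lin[OF tau_lin])
lemma tau12_Rsum: "tau12 (Rsum r \<Phi>) = Rsum r (\<lambda>a b. tau12 (\<Phi> a b))" by (rule Rsum_lin[OF tau12_lin])
lemma tens21_Rsum: "tens21 (Rsum r \<Phi>) v = Rsum r (\<lambda>a b. tens21 (\<Phi> a b) v)" by (rule Rsum_lin[OF tens21_lin])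
lemma tens12_Rsum: "tens12 u (Rsum r \<Phi>) = Rsum r (\<lambda>a b. tens12 u (\<Phi> a b))" by (rule Rsum_lin[OF tens12_lin])

lemma map2_add: "map2 f g (X + Y) = map2 f g X + map2 f g Y" by (rule lin_add[OF map2_lin])
lemma map2_diff: "map2 f g (X - Y) = map2 f g X - map2 f g Y" by (rule lin_diff[OF map2_lin])
lemma mapD_I_add: "mapD_I D (X + Y) = mapD_I D X + mapD_I D Y" by (rule lin_add[OF mapD_I_lin])
lemma mapD_I_diff: "mapD_I D (X - Y) = mapD_I D X - mapD_I D Y" by (rule lin_diff[OF mapD_I_lin])
lemma mapI_D_add: "mapI_D D (X + Y) = mapI_D D X + mapI_D D Y" by (rule lin_add[OF mapI_D_lin])
lemma mapI_D_diff: "mapI_D D (X - Y) = mapI_D D X - mapI_D D Y" by (rule lin_diff[OF mapI_D_lin])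
lemma tau_add: "tau (X + Y) = tau X + tau Y" by (rule T2_ext) simp
lemma tau_diff: "tau (X - Y) = tau X - tau Y" by (rule T2_ext) simp
lemma tau12_add: "tau12 (X + Y) = tau12 X + tau12 Y" by (rule T3_ext) simp
lemma tau12_diff: "tau12 (X - Y) = tau12 X - tau12 Y" by (rule T3_ext) simp
lemma tens21_add: "tens21 (X + Y) v = tens21 X v + tens21 Y (v :: 'i \<Rightarrow> 'k::field)" by (rule T3_ext) (simp add: algebra_simps)
lemma tens21_diff: "tens21 (X - Y) v = tens21 X v - tens21 Y (v :: 'i \<Rightarrow> 'k::field)" by (rule T3_ext) (simp add: algebra_simps)
lemma tens12_add: "tens12 u (X + Y) = tens12 u X + tens12 (u :: 'i \<Rightarrow> 'k::field) Y" by (rule T3_ext) (simp add: algebra_simps)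
lemma tens12_diff: "tens12 u (X - Y) = tens12 u X - tens12 (u :: 'i \<Rightarrow> 'k::field) Y" by (rule T3_ext) (simp add: algebra_simps)

lemma tau_tens2: "tau (tens2 u v) = tens2 v (u :: _ \<Rightarrow> _::field)" by (rule T2_ext) (simp add: mult.commute)

lemmas push_simps = tau_tens2 map2_Rsum mapD_I_Rsum mapI_D_Rsum tau_Rsum tau12_Rsum tens21_Rsum tens12_Rsum
  map2_add map2_diff mapD_I_add mapD_I_diff mapI_D_add mapI_D_diff tau_add tau_diff tau12_add tau12_diff
  tens21_add tens21_diff tens12_add tens12_diff map2_tens2 mapD_I_tens2 mapI_D_tens2 Rsum_add Rsum_diff
  lin_Rsum_arg lin_add_fun lin_diff_fun lin_tens2_1 lin_tens2_2 lin_id lin_id'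

lemma trilin_t:
  assumes f: "linear_map f" and g: "linear_map g" and h: "linear_map h"
  shows "trilin (\<lambda>u v w. tens3 (f u) (g v) (h w))" "trilin (\<lambda>u v w. tens3 (f u) (h w) (g v))"
    "trilin (\<lambda>u v w. tens3 (g v) (f u) (h w))" "trilin (\<lambda>u v w. tens3 (g v) (h w) (f u))"
    "trilin (\<lambda>u v w. tens3 (h w) (f u) (g v))" "trilin (\<lambda>u v w. tens3 (h w) (g v) (f u))"
  unfolding trilin_def
  by (intro conjI allI linear_mapI; rule T3_ext;
      simp add: lin_add[OF f] lin_smul[OF f] lin_add[OF g] lin_smul[OF g] lin_add[OF h] lin_smul[OF h] algebra_simps)+

lemma bilin_t3:
  assumes f: "linear_map f" and g: "linear_map g"
  shows "bilin (\<lambda>u v. tens3 (f u) (g v) z)" "bilin (\<lambda>u v. tens3 (g v) (f u) z)"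
    "bilin (\<lambda>u v. tens3 (f u) z (g v))" "bilin (\<lambda>u v. tens3 (g v) z (f u))"
    "bilin (\<lambda>u v. tens3 z (f u) (g v))" "bilin (\<lambda>u v. tens3 z (g v) (f u))"
  unfolding bilin_def
  by (intro conjI allI linear_mapI; rule T3_ext;
      simp add: lin_add[OF f] lin_smul[OF f] lin_add[OF g] lin_smul[OF g] algebra_simps)+

lemma bilin_t2:
  assumes f: "linear_map f" and g: "linear_map g"
  shows "bilin (\<lambda>u v. tens2 (f u) (g v))" "bilin (\<lambda>u v. tens2 (g v) (f u))"
  unfolding bilin_def
  by (intro conjI allI linear_mapI; rule T2_ext;
      simp add: lin_add[OF f] lin_smul[OF f] lin_add[OF g] lin_smul[OF g] algebra_simps)+

definition KD :: "(('i \<Rightarrow> 'k) \<Rightarrow> ('i \<Rightarrow> 'k) \<Rightarrow> ('i \<Rightarrow> 'k) \<Rightarrow> ('i \<Rightarrow> 'k) \<Rightarrow> ('j \<Rightarrow> 'k::field))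
   \<Rightarrow> ('i \<Rightarrow> 'k) \<Rightarrow> ('i \<Rightarrow> 'k) \<Rightarrow> ('i \<Rightarrow> 'k) \<Rightarrow> ('i \<Rightarrow> 'k) \<Rightarrow> ('j \<Rightarrow> 'k)" where
  "KD K a b c d = K a b c d - K c d a b"

lemma RR_KD_zero: "Rsum r (\<lambda>a b. Rsum r (\<lambda>c d. KD K a b c d)) = 0"
proof -
  have "Rsum r (\<lambda>a b. Rsum r (\<lambda>c d. KD K a b c d))
      = Rsum r (\<lambda>a b. Rsum r (\<lambda>c d. K a b c d)) - Rsum r (\<lambda>a b. Rsum r (\<lambda>c d. K c d a b))"
    by (simp add: KD_def Rsum_diff)
  also have "Rsum r (\<lambda>a b. Rsum r (\<lambda>c d. K c d a b)) = Rsum r (\<lambda>a b. Rsum r (\<lambda>c d. K a b c d))"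
    by (rule Rsum_swap)
  finally show ?thesis by (simp only: diff_self)
qed

locale LDR = LDA sc pr for sc pr :: "('i::finite \<Rightarrow> 'k::field) \<Rightarrow> ('i \<Rightarrow> 'k) \<Rightarrow> ('i \<Rightarrow> 'k)" +
  fixes r :: "'i \<times> 'i \<Rightarrow> 'k"
  assumes LD: "LD_algebra sc pr" and SYB: "S_YB sc pr r = 0" and INV: "invariant sc pr (r + tau r)"
begin

lemma AX1_zero: "AX1 u v w = 0"
proof -
  have "sc (ci u v) w = sc u (sc v w) - sc v (sc u w)" using LD unfolding LD_algebra_def by blast
  thus ?thesis unfolding AX1_def by simp
qed
lemma AX2_zero: "AX2 u v w = 0"
proof -
  have "pr v (ci u w) + pr (sc u v) w = sc u (pr v w)" using LD unfolding LD_algebra_def by blast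
  thus ?thesis unfolding AX2_def by simp
qed
lemma AX3_zero: "AX3 u v w = 0"
proof -
  have "pr u (ci v w) = pr (pr u v) w + sc v (pr u w)" using LD unfolding LD_algebra_def by blast
  thus ?thesis unfolding AX3_def by simp
qed

lemma ci_lin1: "linear_map (\<lambda>w. ci w a)" unfolding circ_op_def by (rule lin_add_fun[OF sc_lin1 pr_lin1])
lemma ci_lin2: "linear_map (\<lambda>w. ci a w)" unfolding circ_op_def by (rule lin_add_fun[OF sc_lin2 pr_lin2])
lemma od_lin1: "linear_map (\<lambda>w. od w a)" unfolding odot_op_def by (rule lin_add_fun[OF sc_lin1 pr_lin2])
lemma od_lin2: "linear_map (\<lambda>w. od a w)" unfolding odot_op_def by (rule lin_add_fun[OF sc_lin2 pr_lin1])
lemma st_lin1: "linear_map (\<lambda>w. st w a)" unfolding star_op_def by (rule lin_add_fun[OF ci_lin1 ci_lin2])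
lemma st_lin2: "linear_map (\<lambda>w. st a w)" unfolding star_op_def by (rule lin_add_fun[OF ci_lin2 ci_lin1])

lemma Lm_lin: "linear_map (Lm sc x)" "linear_map (Lm pr x)" "linear_map (Lm ci x)" "linear_map (Lm od x)" "linear_map (Lm st x)"
  unfolding Lm_def using sc_lin2 pr_lin2 ci_lin2 od_lin2 st_lin2 by auto
lemma Rm_lin: "linear_map (Rm sc x)" "linear_map (Rm pr x)" "linear_map (Rm ci x)" "linear_map (Rm od x)" "linear_map (Rm st x)"
  unfolding Rm_def using sc_lin1 pr_lin1 ci_lin1 od_lin1 st_lin1 by auto

lemmas op_lins = sc_lin1 sc_lin2 pr_lin1 pr_lin2 ci_lin1 ci_lin2 od_lin1 od_lin2 st_lin1 st_lin2 Lm_lin Rm_lin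

definition DS where "DS x = Rsum r (dsT x)"
definition DP where "DP x = Rsum r (dpT x)"

lemma dsT_lin: "linear_map (\<lambda>x. dsT x a b)"
  unfolding dsT_def by (intro lin_diff_fun lin_tens2_1 lin_tens2_2 op_lins)
lemma dpT_lin: "linear_map (\<lambda>x. dpT x a b)"
  unfolding dpT_def by (intro lin_diff_fun lin_tens2_1 lin_tens2_2 op_lins)

lemma DS_lin: "linear_map DS"
  using lin_Rsum_arg[of "\<lambda>x a b. dsT x a b" r, OF dsT_lin] by (simp add: DS_def[abs_def])
lemma DP_lin: "linear_map DP"
  using lin_Rsum_arg[of "\<lambda>x a b. dpT x a b" r, OF dpT_lin] by (simp add: DP_def[abs_def])

lemma tau_tau: "tau (tau t) = t" by (rule T2_ext) simp

lemma Delta_succ_eq: "Delta_succ sc pr r = DS"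
proof (rule ext)
  fix x
  show "Delta_succ sc pr r x = DS x"
    unfolding Delta_succ_def DS_def Rsum_map2 Rsum_diff
    by (rule Rsum_cong) (simp only: dsT_def Lm_def Rm_def id_apply)
qed

lemma INV1: "map2 (Lm od u) id (r + tau r) - map2 id (Rm ci u) (r + tau r) = 0"
  using INV unfolding invariant_def by blast
lemma INV2: "map2 (Lm st u) id (tau (r + tau r)) - map2 id (Rm pr u) (tau (r + tau r)) = 0"
  using INV unfolding invariant_def by blast

lemma Rsum_neg: "Rsum r (\<lambda>a b. - \<Phi> a b) = - Rsum r \<Phi>"
proof -
  have "Rsum r (\<lambda>a b. - \<Phi> a b) + Rsum r \<Phi> = 0"
    unfolding Rsum_add by (simp add: Rsum_zero)
  thus ?thesis by (simp only: eq_neg_iff_add_eq_0)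
qed

lemma Delta_prec_eq: "Delta_prec sc pr r = DP"
proof (rule ext)
  fix x
  let ?F = "\<lambda>a b. tens2 (st x a) b - tens2 a (pr b x)"
  have tt: "tau (r + tau r) = tau r + r" by (rule T2_ext) simp
  have "Rsum (tau r + r) ?F = 0"
    using INV2[of x] unfolding tt Rsum_map2 Rsum_diff by (simp only: Lm_def Rm_def id_apply)
  hence F0: "Rsum (tau r) ?F + Rsum r ?F = 0" by (simp only: Rsum_plus_r)
  have F1: "Rsum r (dpT x) = - Rsum r ?F"
  proof -
    have "Rsum r (dpT x) = Rsum r (\<lambda>a b. - ?F a b)" by (rule Rsum_cong) (simp add: dpT_def)
    thus ?thesis by (simp only: Rsum_neg)
  qed
  have F2: "Rsum (tau r) ?F = - Rsum r ?F" using F0 by (simp only: eq_neg_iff_add_eq_0)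
  have F3: "Delta_prec sc pr r x = Rsum (tau r) ?F"
    unfolding Delta_prec_def Rsum_map2 Rsum_diff
    by (rule Rsum_cong) (simp only: Lm_def Rm_def id_apply)
  show "Delta_prec sc pr r x = DP x" by (simp only: F3 F2 F1[symmetric] DP_def)
qed

lemma InvE0: "Rsum r (\<lambda>a b. tens2 (od u a) b - tens2 a (ci b u) + (tens2 (od u b) a - tens2 b (ci a u))) = 0"
proof -
  have "Rsum (r + tau r) (\<lambda>a b. tens2 (od u a) b - tens2 a (ci b u)) = 0"
    using INV1[of u] unfolding Rsum_map2 Rsum_diff by (simp only: Lm_def Rm_def id_apply)
  thus ?thesis unfolding Rsum_plus_r Rsum_tau Rsum_add .
qed

lemma InvE1: "Rsum r (\<lambda>a b. tens2 (st u a) b - tens2 a (pr b u) + (tens2 (st u b) a - tens2 b (pr a u))) = 0"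
proof -
  have tt: "tau (r + tau r) = r + tau r" by (rule T2_ext) simp
  have "Rsum (r + tau r) (\<lambda>a b. tens2 (st u a) b - tens2 a (pr b u)) = 0"
    using INV2[of u] unfolding tt Rsum_map2 Rsum_diff by (simp only: Lm_def Rm_def id_apply)
  thus ?thesis unfolding Rsum_plus_r Rsum_tau Rsum_add .
qed

lemma L2_gH0: "bilin H \<Longrightarrow> L2 H (tens2 (od u a) b - tens2 a (ci b u) + (tens2 (od u b) a - tens2 b (ci a u))) = gH0 H u a b"
  by (simp only: gH0_def lin_add[OF L2_lin] lin_diff[OF L2_lin] L2_tens2)
lemma L2_gH1: "bilin H \<Longrightarrow> L2 H (tens2 (st u a) b - tens2 a (pr b u) + (tens2 (st u b) a - tens2 b (pr a u))) = gH1 H u a b"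
  by (simp only: gH1_def lin_add[OF L2_lin] lin_diff[OF L2_lin] L2_tens2)

lemma R_gH0_zero: assumes "bilin H" shows "Rsum r (\<lambda>a b. gH0 H u a b) = 0"
proof -
  have "Rsum r (\<lambda>a b. gH0 H u a b) = Rsum r (\<lambda>a b. L2 H (tens2 (od u a) b - tens2 a (ci b u) + (tens2 (od u b) a - tens2 b (ci a u))))"
    by (rule Rsum_cong) (rule L2_gH0[OF assms, symmetric])
  also have "\<dots> = L2 H (Rsum r (\<lambda>a b. tens2 (od u a) b - tens2 a (ci b u) + (tens2 (od u b) a - tens2 b (ci a u))))"
    by (rule Rsum_lin[OF L2_lin, symmetric])
  also have "\<dots> = 0" by (simp only: InvE0 lin_zero[OF L2_lin])
  finally show ?thesis .
qed
lemma R_gH1_zero: assumes "bilin H" shows "Rsum r (\<lambda>a b. gH1 H u a b) = 0"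
proof -
  have "Rsum r (\<lambda>a b. gH1 H u a b) = Rsum r (\<lambda>a b. L2 H (tens2 (st u a) b - tens2 a (pr b u) + (tens2 (st u b) a - tens2 b (pr a u))))"
    by (rule Rsum_cong) (rule L2_gH1[OF assms, symmetric])
  also have "\<dots> = L2 H (Rsum r (\<lambda>a b. tens2 (st u a) b - tens2 a (pr b u) + (tens2 (st u b) a - tens2 b (pr a u))))"
    by (rule Rsum_lin[OF L2_lin, symmetric])
  also have "\<dots> = 0" by (simp only: InvE1 lin_zero[OF L2_lin])
  finally show ?thesis .
qed

lemma RR_gH0_zero: assumes "\<And>c d. bilin (H c d)" shows "Rsum r (\<lambda>a b. Rsum r (\<lambda>c d. gH0 (H c d) (u c d) a b)) = 0"
proof -
  have "Rsum r (\<lambda>a b. Rsum r (\<lambda>c d. gH0 (H c d) (u c d) a b)) = Rsum r (\<lambda>c d. Rsum r (\<lambda>a b. gH0 (H c d) (u c d) a b))"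
    by (rule Rsum_swap)
  also have "\<dots> = Rsum r (\<lambda>c d. 0)" by (rule Rsum_cong) (rule R_gH0_zero[OF assms])
  finally show ?thesis by (simp only: Rsum_zero)
qed
lemma RR_gH1_zero: assumes "\<And>c d. bilin (H c d)" shows "Rsum r (\<lambda>a b. Rsum r (\<lambda>c d. gH1 (H c d) (u c d) a b)) = 0"
proof -
  have "Rsum r (\<lambda>a b. Rsum r (\<lambda>c d. gH1 (H c d) (u c d) a b)) = Rsum r (\<lambda>c d. Rsum r (\<lambda>a b. gH1 (H c d) (u c d) a b))"
    by (rule Rsum_swap)
  also have "\<dots> = Rsum r (\<lambda>c d. 0)" by (rule Rsum_cong) (rule R_gH1_zero[OF assms])
  finally show ?thesis by (simp only: Rsum_zero)
qed

lemma S_YB_RR: "S_YB sc pr r = Rsum r (\<lambda>a b. Rsum r (\<lambda>c d. sH tens3 a b c d))"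
  unfolding S_YB_def Rsum_def sH_def by (simp only: smul_sum smul_smul)

lemma L3_sH: "trilin H \<Longrightarrow> L3 H (sH tens3 a b c d) = sH H a b c d"
  by (simp only: sH_def lin_diff[OF L3_lin] L3_tens3)

lemma RR_sH_zero: assumes "trilin H" shows "Rsum r (\<lambda>a b. Rsum r (\<lambda>c d. sH H a b c d)) = 0"
proof -
  have "Rsum r (\<lambda>a b. Rsum r (\<lambda>c d. sH H a b c d)) = Rsum r (\<lambda>a b. Rsum r (\<lambda>c d. L3 H (sH tens3 a b c d)))"
    by (intro Rsum_cong) (rule L3_sH[OF assms, symmetric])
  also have "\<dots> = Rsum r (\<lambda>a b. L3 H (Rsum r (\<lambda>c d. sH tens3 a b c d)))"
    by (intro Rsum_cong) (rule Rsum_lin[OF L3_lin, symmetric])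
  also have "\<dots> = L3 H (Rsum r (\<lambda>a b. Rsum r (\<lambda>c d. sH tens3 a b c d)))"
    by (rule Rsum_lin[OF L3_lin, symmetric])
  also have "\<dots> = 0" by (simp only: S_YB_RR[symmetric] SYB lin_zero[OF L3_lin])
  finally show ?thesis .
qed

lemmas sum_simps = Rsum_add_dist Rsum_diff_dist Rsum_smul_dist Rsum_zero RR_KD_zero
  RR_sH_zero RR_gH0_zero RR_gH1_zero R_gH0_zero R_gH1_zero trilin_t bilin_t3 bilin_t2 op_lins lin_id lin_id'

lemmas push_all = push_simps DS_def DP_def dsT_def dpT_def op_lins DS_lin DP_lin

end

context LDR begin
definition K_C1 where "K_C1 x a b c d = 0 - tens3 a c (pr b (pr d x)) - tens3 a c (pr b (sc d x)) + tens3 a c (pr (pr b d) x) + tens3 a c (pr (sc b d) x) - tens3 a c (sc b (pr d x)) - tens3 a c (sc b (sc d x)) + tens3 a c (sc (pr b d) x) + tens3 a c (sc (sc b d) x) + tens3 a (pr c (pr b x)) d + tens3 a (pr c (sc b x)) d + tens3 a (pr (sc b c) x) d - tens3 a (sc b c) (pr d x) - tens3 a (sc b c) (sc d x) + tens3 a (sc x (sc b c)) d + tens3 a (sc (pr b x) c) d + tens3 a (sc (sc b x) c) d + tens3 (pr a c) d (pr b x) + tens3 (pr a c) d (sc b x) - tens3 (pr (pr a x) c) d b - tens3 (pr (sc x a) c) d b - tens3 (sc a c) b (pr d x) - tens3 (sc a c) b (sc d x) + tens3 (sc a (pr c x)) b d + tens3 (sc a (sc x c)) b d"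

lemma C1: "mapD_I (\<lambda>x. DS x + DP x) (DS x) = mapI_D DS (DS x) - tau12 (mapI_D DS (DS x))"
proof -
  have e1: "mapD_I (\<lambda>x. DS x + DP x) (DS x) - (mapI_D DS (DS x) - tau12 (mapI_D DS (DS x))) = Rsum r (\<lambda>a b. Rsum r (\<lambda>c d. sH (\<lambda>u v w. tens3 (sc x u) v w) a b c d + sH (\<lambda>u v w. tens3 (pr u x) v w) a b c d - sH (\<lambda>u v w. tens3 v (sc x u) w) a b c d + sH (\<lambda>u v w. tens3 v u (pr w x)) a b c d - sH (\<lambda>u v w. tens3 v (pr u x) w) a b c d + sH (\<lambda>u v w. tens3 v u (sc w x)) a b c d + gH0 (\<lambda>t1 t2. tens3 t1 (sc x t2) d) c a b - gH1 (\<lambda>t1 t2. tens3 t1 (sc x t2) d) c a b + gH0 (\<lambda>t1 t2. tens3 (sc t2 c) t1 d) x a b + gH0 (\<lambda>t1 t2. tens3 (pr c t2) t1 d) x a b + gH0 (\<lambda>t1 t2. tens3 t1 (pr t2 x) d) c a b - gH1 (\<lambda>t1 t2. tens3 t1 (pr t2 x) d) c a b - gH0 (\<lambda>t1 t2. tens3 t1 t2 (pr d x)) c a b + gH1 (\<lambda>t1 t2. tens3 t1 t2 (pr d x)) c a b - gH0 (\<lambda>t1 t2. tens3 t1 t2 (sc d x)) c a b + gH1 (\<lambda>t1 t2. tens3 t1 t2 (sc d x)) c a b + tens3 c (AX1 d x a) b + tens3 c (AX2 d a x) b + tens3 (AX1 a x c) b d + tens3 (AX2 a c x) b d - tens3 a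 c (AX2 b d x) + tens3 a c (AX3 b d x) - tens3 (AX2 x c a) b d + tens3 (AX3 c x a) b d - tens3 a c (AX1 b d x) + KD (K_C1 x) a b c d))"
    apply (simp only: push_all)
    apply (intro Rsum_cong T3_ext)
    apply (simp add: tw_simps K_C1_def KD_def Lm_def Rm_def)
    by algebra
  have e2: "Rsum r (\<lambda>a b. Rsum r (\<lambda>c d. sH (\<lambda>u v w. tens3 (sc x u) v w) a b c d + sH (\<lambda>u v w. tens3 (pr u x) v w) a b c d - sH (\<lambda>u v w. tens3 v (sc x u) w) a b c d + sH (\<lambda>u v w. tens3 v u (pr w x)) a b c d - sH (\<lambda>u v w. tens3 v (pr u x) w) a b c d + sH (\<lambda>u v w. tens3 v u (sc w x)) a b c d + gH0 (\<lambda>t1 t2. tens3 t1 (sc x t2) d) c a b - gH1 (\<lambda>t1 t2. tens3 t1 (sc x t2) d) c a b + gH0 (\<lambda>t1 t2. tens3 (sc t2 c) t1 d) x a b + gH0 (\<lambda>t1 t2. tens3 (pr c t2) t1 d) x a b + gH0 (\<lambda>t1 t2. tens3 t1 (pr t2 x) d) c a b - gH1 (\<lambda>t1 t2. tens3 t1 (pr t2 x) d) c a b - gH0 (\<lambda>t1 t2. tens3 t1 t2 (pr d x)) c a b + gH1 (\<lambda>t1 t2. tens3 t1 t2 (pr d x)) c a b - gH0 (\<lambda>t1 t2. tens3 t1 t2 (sc d x)) c a b + gH1 (\<lambda>t1 t2. tens3 t1 t2 (sc d x)) c a b + tens3 c (AX1 d x a) b + tens3 c (AX2 d a x) b + tens3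 (AX1 a x c) b d + tens3 (AX2 a c x) b d - tens3 a c (AX2 b d x) + tens3 a c (AX3 b d x) - tens3 (AX2 x c a) b d + tens3 (AX3 c x a) b d - tens3 a c (AX1 b d x) + KD (K_C1 x) a b c d)) = 0"
    by (simp only: sum_simps AX1_zero AX2_zero AX3_zero tens3_zero1 tens3_zero2 tens3_zero3 tens2_zero1 tens2_zero2 smul_zero add_0_left add_0_right diff_0_right diff_self Rsum_neg minus_zero)
  show ?thesis using e1 e2 by (simp only: right_minus_eq)
qed

definition K_C2 where "K_C2 x a b c d = 0 - tens3 a c (pr d (pr b x)) - tens3 a c (pr d (sc b x)) + tens3 a d (pr (sc b c) x) + tens3 a d (sc (pr b x) c) + tens3 a d (sc (pr x b) c) + tens3 a d (sc (sc b x) c) + tens3 a d (sc (sc x b) c) - tens3 a (pr b (pr d x)) c - tens3 a (pr b (pr x d)) c - tens3 a (pr b (sc d x)) c - tens3 a (pr b (sc x d)) c + tens3 a (pr c (pr b x)) d + tens3 a (pr c (sc b x)) d - tens3 a (pr d x) (sc b c) + tens3 a (pr d (pr b x)) c + tens3 a (pr d (sc b x)) c - tens3 a (pr x d) (sc b c) + tens3 a (pr x (pr b d)) c + tens3 a (pr x (sc b d)) c + tens3 a (pr (pr b d) x) c + tens3 a (pr (pr b x) c) d + tens3 a (pr (pr b x) d) c + tens3 a (pr (sc b d) x) c + tens3 a (pr (sc b x) c) d + tens3 a (pr (sc b x) d) c - tens3 a (sc b (pr d x)) c - tens3 a (sc b (pr x d)) c - tens3 a (sc b (sc d x)) c - tens3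 a (sc b (sc x d)) c + tens3 a (sc c (pr b x)) d + tens3 a (sc c (sc b x)) d - tens3 a (sc d x) (sc b c) + tens3 a (sc d (pr b x)) c + tens3 a (sc d (sc b x)) c - tens3 a (sc x d) (sc b c) + tens3 a (sc x (pr b d)) c + tens3 a (sc x (sc b d)) c + tens3 a (sc (pr b d) x) c + tens3 a (sc (pr b x) c) d + tens3 a (sc (pr b x) d) c + tens3 a (sc (sc b d) x) c + tens3 a (sc (sc b x) c) d + tens3 a (sc (sc b x) d) c + tens3 (pr a c) (pr b x) d + tens3 (pr a c) (pr x b) d + tens3 (pr a c) (sc b x) d + tens3 (pr a c) (sc x b) d + tens3 (pr a x) c (pr d b) + tens3 (pr a x) d (pr c b) - tens3 (pr a x) (pr b c) d - tens3 (pr a x) (pr c b) d - tens3 (pr a x) (pr d b) c - tens3 (pr a x) (sc b c) d - tens3 (pr a x) (sc c b) d - tens3 (pr a x) (sc d b) c - tens3 (pr a (pr c x)) b d - tens3 (pr a (pr x c)) b d - tens3 (pr a (sc c x)) b d - tens3 (pr a (sc x c)) b d - tens3 (pr (pr a d) x) b c + tens3 (pr (sc a c) x) d b + tens3 (pr (sc b c) x) d a - tens3 (sc a c) (pr d x) b - tens3 (sc a c) (pr x d) b - tens3 (sc a c) (sc d x) b - tens3 (sc a c) (sc x d) b + tens3 (sc x a) c (pr d b) + tens3 (sc x a) d (pr c b) - tens3 (sc x a) (pr b c) d - tens3 (sc x a) (pr c b) d - tens3 (sc x a) (pr d b) c - tens3 (sc x a) (sc b c) d - tens3 (sc x a) (sc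 c b) d - tens3 (sc x a) (sc d b) c + tens3 (sc x (pr a c)) b d + tens3 (sc (pr a x) c) d b + tens3 (sc (pr x a) c) d b + tens3 (sc (sc a x) c) d b + tens3 (sc (sc x a) c) d b"

lemma C2: "mapI_D DP (DS x) - mapD_I DS (DP x) = tau12 (mapI_D (\<lambda>x. DS x + DP x) (DP x))"
proof -
  have e1: "mapI_D DP (DS x) - mapD_I DS (DP x) - tau12 (mapI_D (\<lambda>x. DS x + DP x) (DP x)) = Rsum r (\<lambda>a b. Rsum r (\<lambda>c d. sH (\<lambda>u v w. tens3 v (pr x w) u) a b c d + sH (\<lambda>u v w. tens3 v (pr w x) u) a b c d - sH (\<lambda>u v w. tens3 v w (pr u x)) a b c d + sH (\<lambda>u v w. tens3 v (sc x w) u) a b c d + sH (\<lambda>u v w. tens3 v (sc w x) u) a b c d + sH (\<lambda>u v w. tens3 (pr v x) w u) a b c d + sH (\<lambda>u v w. tens3 (pr u x) w v) a b c d + sH (\<lambda>u v w. tens3 (sc x v) w u) a b c d + sH (\<lambda>u v w. tens3 (sc x u) w v) a b c d + gH1 (\<lambda>t1 t2. tens3 c t1 t2) (sc d x) a b - gH1 (\<lambda>t1 t2. tens3 (pr t2 c) t1 d) x a b + gH0 (\<lambda>t1 t2. tens3 t1 d (pr t2 x)) c a b + gH1 (\<lambda>t1 t2. tens3 c t1 t2) (pr d x) a b - gH1 (\<lambda>t1 t2. tens3 c (pr d t1) t2) x a b - gH1 (\<lambda>t1 t2. tens3 c t1 (sc d t2)) x a b - gH0 (\<lambda>t1 t2.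 tens3 t1 (sc x d) t2) c a b + gH1 (\<lambda>t1 t2. tens3 t1 (sc x d) t2) c a b - gH0 (\<lambda>t1 t2. tens3 t1 (sc d x) t2) c a b + gH1 (\<lambda>t1 t2. tens3 t1 (sc d x) t2) c a b - gH0 (\<lambda>t1 t2. tens3 t1 (pr d x) t2) c a b + gH1 (\<lambda>t1 t2. tens3 t1 (pr d x) t2) c a b - gH1 (\<lambda>t1 t2. tens3 t1 d (pr t2 x)) c a b - gH0 (\<lambda>t1 t2. tens3 t1 (pr x d) t2) c a b + gH1 (\<lambda>t1 t2. tens3 t1 (pr x d) t2) c a b - gH1 (\<lambda>t1 t2. tens3 c (sc d t1) t2) x a b - gH1 (\<lambda>t1 t2. tens3 (sc c t2) t1 d) x a b - gH1 (\<lambda>t1 t2. tens3 (pr c x) t1 t2) d a b - gH1 (\<lambda>t1 t2. tens3 (sc x c) t1 t2) d a b - gH1 (\<lambda>t1 t2. tens3 t2 d (sc t1 c)) x a b - gH0 (\<lambda>t1 t2. tens3 (sc x t1) d t2) c a b + gH1 (\<lambda>t1 t2. tens3 (sc x t1) d t2) c a b + tens3 (AX1 x c a) b d + tens3 (AX1 c x a) b d - tens3 a (AX2 b x d) c - tens3 a (AX1 b x d) c + tens3 a (AX3 b x d) c - tens3 a (AX2 b d x) c + tens3 a (AX3 b d x) c + tens3 c b (AX2 d a x) + tens3 (AX3 a x c) b d + tens3 (AX2 c a x) b d - tens3 a (AX1 b d x) c + tens3 (AX2 d a x) b c - tens3 (AX3 a d x) b c + tens3 b d (AX1 x a c) + tens3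 b d (AX1 a x c) + tens3 c b (AX1 x d a) + tens3 c b (AX1 d x a) + KD (K_C2 x) a b c d))"
    apply (simp only: push_all)
    apply (intro Rsum_cong T3_ext)
    apply (simp add: tw_simps K_C2_def KD_def Lm_def Rm_def)
    by algebra
  have e2: "Rsum r (\<lambda>a b. Rsum r (\<lambda>c d. sH (\<lambda>u v w. tens3 v (pr x w) u) a b c d + sH (\<lambda>u v w. tens3 v (pr w x) u) a b c d - sH (\<lambda>u v w. tens3 v w (pr u x)) a b c d + sH (\<lambda>u v w. tens3 v (sc x w) u) a b c d + sH (\<lambda>u v w. tens3 v (sc w x) u) a b c d + sH (\<lambda>u v w. tens3 (pr v x) w u) a b c d + sH (\<lambda>u v w. tens3 (pr u x) w v) a b c d + sH (\<lambda>u v w. tens3 (sc x v) w u) a b c d + sH (\<lambda>u v w. tens3 (sc x u) w v) a b c d + gH1 (\<lambda>t1 t2. tens3 c t1 t2) (sc d x) a b - gH1 (\<lambda>t1 t2. tens3 (pr t2 c) t1 d) x a b + gH0 (\<lambda>t1 t2. tens3 t1 d (pr t2 x)) c a b + gH1 (\<lambda>t1 t2. tens3 c t1 t2) (pr d x) a b - gH1 (\<lambda>t1 t2. tens3 c (pr d t1) t2) x a b - gH1 (\<lambda>t1 t2. tens3 c t1 (sc d t2)) x a b - gH0 (\<lambda>t1 t2. tens3 t1 (sc x d) t2) c a b + gH1 (\<lambda>t1 t2. tens3 t1 (sc x d) t2) c a b - gH0 (\<lambda>t1 t2. tens3 t1 (sc d x) t2) c a b + gH1 (\<lambda>t1 t2.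 tens3 t1 (sc d x) t2) c a b - gH0 (\<lambda>t1 t2. tens3 t1 (pr d x) t2) c a b + gH1 (\<lambda>t1 t2. tens3 t1 (pr d x) t2) c a b - gH1 (\<lambda>t1 t2. tens3 t1 d (pr t2 x)) c a b - gH0 (\<lambda>t1 t2. tens3 t1 (pr x d) t2) c a b + gH1 (\<lambda>t1 t2. tens3 t1 (pr x d) t2) c a b - gH1 (\<lambda>t1 t2. tens3 c (sc d t1) t2) x a b - gH1 (\<lambda>t1 t2. tens3 (sc c t2) t1 d) x a b - gH1 (\<lambda>t1 t2. tens3 (pr c x) t1 t2) d a b - gH1 (\<lambda>t1 t2. tens3 (sc x c) t1 t2) d a b - gH1 (\<lambda>t1 t2. tens3 t2 d (sc t1 c)) x a b - gH0 (\<lambda>t1 t2. tens3 (sc x t1) d t2) c a b + gH1 (\<lambda>t1 t2. tens3 (sc x t1) d t2) c a b + tens3 (AX1 x c a) b d + tens3 (AX1 c x a) b d - tens3 a (AX2 b x d) c - tens3 a (AX1 b x d) c + tens3 a (AX3 b x d) c - tens3 a (AX2 b d x) c + tens3 a (AX3 b d x) c + tens3 c b (AX2 d a x) + tens3 (AX3 a x c) b d + tens3 (AX2 c a x) b d - tens3 a (AX1 b d x) c + tens3 (AX2 d a x) b c - tens3 (AX3 a d x) b c + tens3 b d (AX1 x a c) + tens3 b d (AX1 a x c) + tens3 c b (AX1 x d a) + tens3 c b (AX1 d x a) + KD (K_C2 x) a b c d)) = 0"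
    by (simp only: sum_simps AX1_zero AX2_zero AX3_zero tens3_zero1 tens3_zero2 tens3_zero3 tens2_zero1 tens2_zero2 smul_zero add_0_left add_0_right diff_0_right diff_self Rsum_neg minus_zero)
  show ?thesis using e1 e2 by (simp only: right_minus_eq)
qed

definition K_C3 where "K_C3 x a b c d = 0 - tens3 a c (pr b (pr d x)) - tens3 a c (pr b (sc d x)) - tens3 a d (sc (pr b x) c) - tens3 a d (sc (pr x b) c) - tens3 a d (sc (sc b x) c) - tens3 a d (sc (sc x b) c) + tens3 a (pr b c) (pr d x) + tens3 a (pr c x) (pr b d) - tens3 a (pr (pr b c) x) d - tens3 a (pr (pr b x) c) d - tens3 a (sc c (pr b x)) d + tens3 a (sc x c) (pr b d) - tens3 a (sc x (pr b c)) d - tens3 b c (pr (pr a d) x) + tens3 b c (sc (pr d x) a) + tens3 b c (sc (pr x d) a) + tens3 b c (sc (sc d x) a) + tens3 b c (sc (sc x d) a) + tens3 b d (sc (pr c x) a) + tens3 b d (sc (pr x c) a) + tens3 b d (sc (sc c x) a) + tens3 b d (sc (sc x c) a) + tens3 b (pr a c) (pr d x) + tens3 b (pr c x) (pr a d) + tens3 b (pr (pr a d) x) c + tens3 b (pr (sc c a) x) d + tens3 b (pr (sc d a) x) c + tens3 b (sc x c) (pr a d) - tens3 b (sc x (pr a c)) d - tens3 (pr a c) b (pr d x) + tens3 (pr a c) d (pr b x) + tens3 (pr a d) c (pr b x) - tens3 (pr a d) (pr c x) b - tens3 (pr a d) (sc x c) b - tens3 (pr a x) c (pr d b) - tens3 (pr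 a x) d (pr c b) + tens3 (pr a x) (pr b c) d + tens3 (pr a x) (pr c b) d + tens3 (pr a x) (pr d b) c + tens3 (pr a x) (sc b c) d + tens3 (pr a x) (sc c b) d + tens3 (pr a x) (sc d b) c + tens3 (pr a (pr c x)) b d + tens3 (pr a (pr x c)) b d + tens3 (pr a (sc c x)) b d + tens3 (pr a (sc x c)) b d - tens3 (pr b c) a (pr d x) + tens3 (pr b c) (pr a x) d + tens3 (pr b c) (sc x a) d + tens3 (pr b d) c (pr a x) - tens3 (pr b d) (pr c x) a - tens3 (pr b d) (sc x c) a - tens3 (pr x b) c (sc d a) - tens3 (pr x b) (pr a c) d - tens3 (pr x b) (sc c a) d + tens3 (pr x (pr b c)) a d + tens3 (pr x (sc b c)) a d + tens3 (pr (pr a d) x) b c - tens3 (pr (pr a x) c) d b - tens3 (pr (pr x a) c) d b - tens3 (pr (sc a c) x) d b - tens3 (pr (sc a x) c) d b - tens3 (pr (sc b c) x) d a - tens3 (pr (sc x a) c) d b - tens3 (sc a c) b (pr d x) + tens3 (sc a c) d (pr b x) + tens3 (sc a d) c (pr b x) - tens3 (sc a d) (pr c x) b - tens3 (sc a d) (sc x c) b - tens3 (sc a x) c (pr d b) - tens3 (sc a x) d (pr c b) + tens3 (sc a x) (pr b c) d + tens3 (sc a x) (pr c b) d + tens3 (sc a x) (pr d b) c + tens3 (sc a x) (sc b c) d + tens3 (sc a x) (sc c b) d + tens3 (sc a x) (sc d b) c + tens3 (sc a (pr c x)) b d + tens3 (sc a (pr x c)) b d + tens3 (sc a (sc c x))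 b d + tens3 (sc a (sc x c)) b d - tens3 (sc b c) a (pr d x) + tens3 (sc b c) (pr a x) d + tens3 (sc b c) (sc x a) d + tens3 (sc b d) c (pr a x) - tens3 (sc b d) (pr c x) a - tens3 (sc b d) (sc x c) a - tens3 (sc x a) c (pr d b) - tens3 (sc x a) d (pr c b) + tens3 (sc x a) (pr b c) d + tens3 (sc x a) (pr c b) d + tens3 (sc x a) (pr d b) c + tens3 (sc x a) (sc b c) d + tens3 (sc x a) (sc c b) d + tens3 (sc x a) (sc d b) c - tens3 (sc x (pr a c)) b d - tens3 (sc (pr a c) x) b d - tens3 (sc (pr a x) c) d b - tens3 (sc (pr x a) c) d b - tens3 (sc (sc a x) c) d b - tens3 (sc (sc x a) c) d b"

lemma C3: "mapI_D (\<lambda>x. DS x + DP x) (DP x) = mapD_I DP (DP x) + tau12 (mapI_D DP (DS x))"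
proof -
  have e1: "mapI_D (\<lambda>x. DS x + DP x) (DP x) - (mapD_I DP (DP x) + tau12 (mapI_D DP (DS x))) = Rsum r (\<lambda>a b. Rsum r (\<lambda>c d. 0 - sH (\<lambda>u v w. tens3 w (pr v x) u) a b c d + sH (\<lambda>u v w. tens3 (sc x u) v w) a b c d - sH (\<lambda>u v w. tens3 (sc x v) w u) a b c d - sH (\<lambda>u v w. tens3 (sc x u) w v) a b c d - sH (\<lambda>u v w. tens3 w (pr u x) v) a b c d + sH (\<lambda>u v w. tens3 (sc u x) v w) a b c d - sH (\<lambda>u v w. tens3 (sc v x) w u) a b c d - sH (\<lambda>u v w. tens3 (sc u x) w v) a b c d + sH (\<lambda>u v w. tens3 (pr u x) v w) a b c d - sH (\<lambda>u v w. tens3 (pr v x) w u) a b c d - sH (\<lambda>u v w. tens3 (pr u x) w v) a b c d - sH (\<lambda>u v w. tens3 w (sc x u) v) a b c d - sH (\<lambda>u v w. tens3 (pr x w) v u) a b c d + sH (\<lambda>u v w. tens3 w v (pr u x)) a b c d + sH (\<lambda>u v w. tens3 w u (pr v x)) a b c d - sH (\<lambda>u v w. tens3 w (sc x v) u) a b c d + gH1 (\<lambda>t1 t2. tens3 t1 t2 (pr d x)) c a b - gH1 (\<lambda>t1 t2. tens3 t1 (sc x t2) d) c a b - gH1 (\<lambda>t1 t2. tens3 t1 (pr t2 x) d) c a b + gH0 (\<lambda>t1 t2. tens3 (sc c t2) t1 d) x a b + gH0 (\<lambda>t1 t2. tens3 (pr c t2) t1 d) x a b + gH0 (\<lambda>t1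 t2. tens3 (sc t2 c) t1 d) x a b + gH0 (\<lambda>t1 t2. tens3 (pr t2 c) t1 d) x a b + gH1 (\<lambda>t1 t2. tens3 d t2 (sc t1 c)) x a b + gH1 (\<lambda>t1 t2. tens3 (sc x c) t1 t2) d a b - gH1 (\<lambda>t1 t2. tens3 (sc t1 x) d t2) c a b + gH0 (\<lambda>t1 t2. tens3 (sc t1 x) d t2) c a b + gH1 (\<lambda>t1 t2. tens3 t2 d (sc t1 c)) x a b - gH1 (\<lambda>t1 t2. tens3 t1 c (pr t2 x)) d a b + gH1 (\<lambda>t1 t2. tens3 t1 (pr c x) t2) d a b + gH1 (\<lambda>t1 t2. tens3 (sc c x) t1 t2) d a b + gH1 (\<lambda>t1 t2. tens3 (pr c x) t1 t2) d a b + gH0 (\<lambda>t1 t2. tens3 (sc x t1) d t2) c a b - gH1 (\<lambda>t1 t2. tens3 (sc x t1) d t2) c a b + gH1 (\<lambda>t1 t2. tens3 (pr x t1) c t2) d a b + gH0 (\<lambda>t1 t2. tens3 (pr x t2) c t1) d a b + gH0 (\<lambda>t1 t2. tens3 (pr x t2) t1 d) c a b + gH1 (\<lambda>t1 t2. tens3 d t1 (pr t2 x)) c a b + gH1 (\<lambda>t1 t2. tens3 t1 (sc x c) t2) d a b + gH0 (\<lambda>t1 t2. tens3 (pr x d) t1 t2) c a b - gH1 (\<lambda>t1 t2. tens3 (pr x d) t1 t2) c a b - gH0 (\<lambda>t1 t2. tens3 d t1 (pr t2 x)) c a b + gH0 (\<lambda>t1 t2. tens3 d (sc x t1) t2) c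 a b - gH1 (\<lambda>t1 t2. tens3 d (sc x t1) t2) c a b + tens3 c (AX3 d x a) b + tens3 (AX3 x c a) b d - tens3 (AX2 c x a) b d - tens3 (AX1 x c a) b d - tens3 (AX1 c x a) b d - tens3 (AX2 x c a) b d + tens3 (AX3 c x a) b d + tens3 (AX2 a c x) b d + tens3 (AX1 a x c) b d - tens3 (AX3 a x c) b d + tens3 c (AX3 d a x) b + tens3 b (AX3 a c x) d - tens3 (AX2 c a x) b d - tens3 b d (AX1 x c a) - tens3 b d (AX1 c x a) + tens3 b (AX3 a d x) c - tens3 b c (AX1 x d a) - tens3 b c (AX1 d x a) + tens3 (AX1 a c x) b d - tens3 b d (AX1 x a c) - tens3 b d (AX1 a x c) - tens3 c b (AX1 x d a) - tens3 c b (AX1 d x a) + tens3 a c (AX3 b d x) - tens3 (AX2 d a x) b c + tens3 (AX3 a d x) b c + tens3 (AX2 a x c) b d - tens3 b (AX2 c a x) d - tens3 b (AX2 d a x) c + KD (K_C3 x) a b c d))"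
    apply (simp only: push_all)
    apply (intro Rsum_cong T3_ext)
    apply (simp add: tw_simps K_C3_def KD_def Lm_def Rm_def)
    by algebra
  have e2: "Rsum r (\<lambda>a b. Rsum r (\<lambda>c d. 0 - sH (\<lambda>u v w. tens3 w (pr v x) u) a b c d + sH (\<lambda>u v w. tens3 (sc x u) v w) a b c d - sH (\<lambda>u v w. tens3 (sc x v) w u) a b c d - sH (\<lambda>u v w. tens3 (sc x u) w v) a b c d - sH (\<lambda>u v w. tens3 w (pr u x) v) a b c d + sH (\<lambda>u v w. tens3 (sc u x) v w) a b c d - sH (\<lambda>u v w. tens3 (sc v x) w u) a b c d - sH (\<lambda>u v w. tens3 (sc u x) w v) a b c d + sH (\<lambda>u v w. tens3 (pr u x) v w) a b c d - sH (\<lambda>u v w. tens3 (pr v x) w u) a b c d - sH (\<lambda>u v w. tens3 (pr u x) w v) a b c d - sH (\<lambda>u v w. tens3 w (sc x u) v) a b c d - sH (\<lambda>u v w. tens3 (pr x w) v u) a b c d + sH (\<lambda>u v w. tens3 w v (pr u x)) a b c d + sH (\<lambda>u v w. tens3 w u (pr v x)) a b c d - sH (\<lambda>u v w. tens3 w (sc x v) u) a b c d + gH1 (\<lambda>t1 t2. tens3 t1 t2 (pr d x)) c a b - gH1 (\<lambda>t1 t2. tens3 t1 (sc x t2) d) c a b - gH1 (\<lambda>t1 t2. tens3 t1 (pr t2 x) d) c a b + gH0 (\<lambda>t1 t2. tens3 (sc c t2) t1 d) x a b + gH0 (\<lambda>t1 t2. tens3 (pr c t2) t1 d) x a b + gH0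 (\<lambda>t1 t2. tens3 (sc t2 c) t1 d) x a b + gH0 (\<lambda>t1 t2. tens3 (pr t2 c) t1 d) x a b + gH1 (\<lambda>t1 t2. tens3 d t2 (sc t1 c)) x a b + gH1 (\<lambda>t1 t2. tens3 (sc x c) t1 t2) d a b - gH1 (\<lambda>t1 t2. tens3 (sc t1 x) d t2) c a b + gH0 (\<lambda>t1 t2. tens3 (sc t1 x) d t2) c a b + gH1 (\<lambda>t1 t2. tens3 t2 d (sc t1 c)) x a b - gH1 (\<lambda>t1 t2. tens3 t1 c (pr t2 x)) d a b + gH1 (\<lambda>t1 t2. tens3 t1 (pr c x) t2) d a b + gH1 (\<lambda>t1 t2. tens3 (sc c x) t1 t2) d a b + gH1 (\<lambda>t1 t2. tens3 (pr c x) t1 t2) d a b + gH0 (\<lambda>t1 t2. tens3 (sc x t1) d t2) c a b - gH1 (\<lambda>t1 t2. tens3 (sc x t1) d t2) c a b + gH1 (\<lambda>t1 t2. tens3 (pr x t1) c t2) d a b + gH0 (\<lambda>t1 t2. tens3 (pr x t2) c t1) d a b + gH0 (\<lambda>t1 t2. tens3 (pr x t2) t1 d) c a b + gH1 (\<lambda>t1 t2. tens3 d t1 (pr t2 x)) c a b + gH1 (\<lambda>t1 t2. tens3 t1 (sc x c) t2) d a b + gH0 (\<lambda>t1 t2. tens3 (pr x d) t1 t2) c a b - gH1 (\<lambda>t1 t2. tens3 (pr x d) t1 t2) c a b - gH0 (\<lambda>t1 t2. tens3 d t1 (pr t2 x)) c a b + gH0 (\<lambda>t1 t2. tens3 d (sc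 x t1) t2) c a b - gH1 (\<lambda>t1 t2. tens3 d (sc x t1) t2) c a b + tens3 c (AX3 d x a) b + tens3 (AX3 x c a) b d - tens3 (AX2 c x a) b d - tens3 (AX1 x c a) b d - tens3 (AX1 c x a) b d - tens3 (AX2 x c a) b d + tens3 (AX3 c x a) b d + tens3 (AX2 a c x) b d + tens3 (AX1 a x c) b d - tens3 (AX3 a x c) b d + tens3 c (AX3 d a x) b + tens3 b (AX3 a c x) d - tens3 (AX2 c a x) b d - tens3 b d (AX1 x c a) - tens3 b d (AX1 c x a) + tens3 b (AX3 a d x) c - tens3 b c (AX1 x d a) - tens3 b c (AX1 d x a) + tens3 (AX1 a c x) b d - tens3 b d (AX1 x a c) - tens3 b d (AX1 a x c) - tens3 c b (AX1 x d a) - tens3 c b (AX1 d x a) + tens3 a c (AX3 b d x) - tens3 (AX2 d a x) b c + tens3 (AX3 a d x) b c + tens3 (AX2 a x c) b d - tens3 b (AX2 c a x) d - tens3 b (AX2 d a x) c + KD (K_C3 x) a b c d)) = 0"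
    by (simp only: sum_simps AX1_zero AX2_zero AX3_zero tens3_zero1 tens3_zero2 tens3_zero3 tens2_zero1 tens2_zero2 smul_zero add_0_left add_0_right diff_0_right diff_self Rsum_neg minus_zero)
  show ?thesis using e1 e2 by (simp only: right_minus_eq)
qed

lemma B1: "DS (od x y) + DP (od x y) - map2 id (Lm od x) (DS y + DP y) + tau (map2 id (Lm od x) (DS y + DP y)) + tau (map2 id (Rm od y) (DS x)) - map2 id (Rm od y) (DS x) = 0"
proof -
  have e1: "DS (od x y) + DP (od x y) - map2 id (Lm od x) (DS y + DP y) + tau (map2 id (Lm od x) (DS y + DP y)) + tau (map2 id (Rm od y) (DS x)) - map2 id (Rm od y) (DS x) = Rsum r (\<lambda>a b. gH0 (\<lambda>t1 t2. tens2 (sc t2 y) t1) x a b - gH0 (\<lambda>t1 t2. tens2 t1 (pr y t2)) x a b - gH0 (\<lambda>t1 t2. tens2 t1 (pr t2 x)) y a b + gH0 (\<lambda>t1 t2. tens2 (pr t2 x) t1) y a b + gH0 (\<lambda>t1 t2. tens2 (sc x t1) t2) y a b + gH0 (\<lambda>t1 t2. tens2 (pr y t2) t1) x a b + gH0 (\<lambda>t1 t2. tens2 t1 t2) (pr y x) a b + gH0 (\<lambda>t1 t2. tens2 t1 t2) (sc y x) a b - gH0 (\<lambda>t1 t2. tens2 (pr t1 y) t2) x a b - gH0 (\<lambda>t1 t2. tens2 t1 (sc y t2)) x a b - gH0 (\<lambda>t1 t2. tens2 t1 (sc t2 x)) y a b - gH0 (\<lambda>t1 t2. tens2 (sc y t1)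 t2) x a b + gH0 (\<lambda>t1 t2. tens2 (pr t1 x) t2) y a b + gH0 (\<lambda>t1 t2. tens2 (sc x t2) t1) y a b + tens2 (AX1 a x y) b + tens2 (AX3 y x a) b - tens2 (AX2 x y a) b + tens2 (AX2 a y x) b - tens2 (AX1 y x a) b - tens2 (AX1 y x b) a - tens2 b (AX2 a y x) - tens2 b (AX1 a y x) - tens2 a (AX1 b y x) + tens2 b (AX3 a y x) + tens2 a (AX3 b y x) - tens2 (AX3 a x y) b + tens2 (AX2 x a y) b - tens2 (AX3 b x y) a + tens2 (AX2 x b y) a + tens2 a (AX1 b x y) - tens2 (AX2 y a x) b - tens2 (AX2 y b x) a)"
    apply (simp only: push_all)
    apply (intro Rsum_cong T2_ext)
    apply (simp add: tw_simps Lm_def Rm_def)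
    by algebra
  have e2: "Rsum r (\<lambda>a b. gH0 (\<lambda>t1 t2. tens2 (sc t2 y) t1) x a b - gH0 (\<lambda>t1 t2. tens2 t1 (pr y t2)) x a b - gH0 (\<lambda>t1 t2. tens2 t1 (pr t2 x)) y a b + gH0 (\<lambda>t1 t2. tens2 (pr t2 x) t1) y a b + gH0 (\<lambda>t1 t2. tens2 (sc x t1) t2) y a b + gH0 (\<lambda>t1 t2. tens2 (pr y t2) t1) x a b + gH0 (\<lambda>t1 t2. tens2 t1 t2) (pr y x) a b + gH0 (\<lambda>t1 t2. tens2 t1 t2) (sc y x) a b - gH0 (\<lambda>t1 t2. tens2 (pr t1 y) t2) x a b - gH0 (\<lambda>t1 t2. tens2 t1 (sc y t2)) x a b - gH0 (\<lambda>t1 t2. tens2 t1 (sc t2 x)) y a b - gH0 (\<lambda>t1 t2. tens2 (sc y t1) t2) x a b + gH0 (\<lambda>t1 t2. tens2 (pr t1 x) t2) y a b + gH0 (\<lambda>t1 t2. tens2 (sc x t2) t1) y a b + tens2 (AX1 a x y) b + tens2 (AX3 y x a) b - tens2 (AX2 x y a) b + tens2 (AX2 a y x) b - tens2 (AX1 y x a) b - tens2 (AX1 y x b) a - tens2 b (AX2 a y x) - tens2 b (AX1 a y x) - tens2 a (AX1 b y x) + tens2 b (AX3 a y x) + tens2 a (AX3 b y x) - tens2 (AX3 a x y) b + tens2 (AX2 x a y) b - tens2 (AX3 b x y) a + tens2 (AX2 x b y) a + tens2 a (AX1 b x y) - tens2 (AX2 y a x) b - tens2 (AX2 y b x) a)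 = 0"
    by (simp only: sum_simps AX1_zero AX2_zero AX3_zero tens3_zero1 tens3_zero2 tens3_zero3 tens2_zero1 tens2_zero2 smul_zero add_0_left add_0_right diff_0_right diff_self Rsum_neg minus_zero)
  show ?thesis using e1 e2 by (simp only:)
qed

lemma B2: "DS (sc x y) + DP (sc x y) - (map2 (Lm sc x) id (DS y + DP y) + map2 id (Lm sc x) (DS y + DP y)) - map2 id (Rm sc y) (DS x + tau (DP x)) + tau (map2 id (Rm od y) (DS x + tau (DP x))) = 0"
proof -
  have e1: "DS (sc x y) + DP (sc x y) - (map2 (Lm sc x) id (DS y + DP y) + map2 id (Lm sc x) (DS y + DP y)) - map2 id (Rm sc y) (DS x + tau (DP x)) + tau (map2 id (Rm od y) (DS x + tau (DP x))) = Rsum r (\<lambda>a b. gH0 (\<lambda>t1 t2. tens2 (pr y t2) t1) x a b + gH0 (\<lambda>t1 t2. tens2 (sc t2 y) t1) x a b + gH1 (\<lambda>t1 t2. tens2 t2 (sc t1 y)) x a b - tens2 (AX2 x y a) b - tens2 (AX1 x a y) b - tens2 a (AX1 x b y))"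
    apply (simp only: push_all)
    apply (intro Rsum_cong T2_ext)
    apply (simp add: tw_simps Lm_def Rm_def)
    by algebra
  have e2: "Rsum r (\<lambda>a b. gH0 (\<lambda>t1 t2. tens2 (pr y t2) t1) x a b + gH0 (\<lambda>t1 t2. tens2 (sc t2 y) t1) x a b + gH1 (\<lambda>t1 t2. tens2 t2 (sc t1 y)) x a b - tens2 (AX2 x y a) b - tens2 (AX1 x a y) b - tens2 a (AX1 x b y)) = 0"
    by (simp only: sum_simps AX1_zero AX2_zero AX3_zero tens3_zero1 tens3_zero2 tens3_zero3 tens2_zero1 tens2_zero2 smul_zero add_0_left add_0_right diff_0_right diff_self Rsum_neg minus_zero)
  show ?thesis using e1 e2 by (simp only:)
qed

lemma B3: "map2 id (Rm sc y) (tau (DP x)) - map2 (Rm pr x) id (DS y + DP y) = 0"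
proof -
  have e1: "map2 id (Rm sc y) (tau (DP x)) - map2 (Rm pr x) id (DS y + DP y) = Rsum r (\<lambda>a b. 0 - gH1 (\<lambda>t1 t2. tens2 t2 (sc t1 y)) x a b + tens2 (AX2 a y x) b - tens2 (AX3 y a x) b + tens2 a (AX1 b x y) + tens2 a (AX1 x b y))"
    apply (simp only: push_all)
    apply (intro Rsum_cong T2_ext)
    apply (simp add: tw_simps Lm_def Rm_def)
    by algebra
  have e2: "Rsum r (\<lambda>a b. 0 - gH1 (\<lambda>t1 t2. tens2 t2 (sc t1 y)) x a b + tens2 (AX2 a y x) b - tens2 (AX3 y a x) b + tens2 a (AX1 b x y) + tens2 a (AX1 x b y)) = 0"
    by (simp only: sum_simps AX1_zero AX2_zero AX3_zero tens3_zero1 tens3_zero2 tens3_zero3 tens2_zero1 tens2_zero2 smul_zero add_0_left add_0_right diff_0_right diff_self Rsum_neg minus_zero)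
  show ?thesis using e1 e2 by (simp only:)
qed

lemma B4: "DS (ci x y) + tau (DP (ci x y)) - (map2 id (Lm ci x) (DS y + tau (DP y)) + map2 (Lm sc x) id (DS y + tau (DP y))) + (map2 id (Lm ci y) (DS x + tau (DP x)) + map2 (Lm sc y) id (DS x + tau (DP x))) = 0"
proof -
  have e1: "DS (ci x y) + tau (DP (ci x y)) - (map2 id (Lm ci x) (DS y + tau (DP y)) + map2 (Lm sc x) id (DS y + tau (DP y))) + (map2 id (Lm ci y) (DS x + tau (DP x)) + map2 (Lm sc y) id (DS x + tau (DP x))) = Rsum r (\<lambda>a b. gH0 (\<lambda>t1 t2. tens2 t1 (pr y t2)) x a b - gH0 (\<lambda>t1 t2. tens2 t1 (pr x t2)) y a b + gH0 (\<lambda>t1 t2. tens2 t1 t2) (sc x y) a b - gH0 (\<lambda>t1 t2. tens2 t1 (sc x t2)) y a b - gH0 (\<lambda>t1 t2. tens2 (sc x t1) t2) y a b + gH0 (\<lambda>t1 t2. tens2 t1 t2) (pr x y) a b + gH0 (\<lambda>t1 t2. tens2 t1 (sc y t2)) x a b + gH0 (\<lambda>t1 t2. tens2 (sc y t1) t2) x a b + tens2 b (AX3 x y a) - tens2 b (AX2 x y a) - tens2 b (AX1 x y a) - tens2 (AX1 x y b) a)"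
    apply (simp only: push_all)
    apply (intro Rsum_cong T2_ext)
    apply (simp add: tw_simps Lm_def Rm_def)
    by algebra
  have e2: "Rsum r (\<lambda>a b. gH0 (\<lambda>t1 t2. tens2 t1 (pr y t2)) x a b - gH0 (\<lambda>t1 t2. tens2 t1 (pr x t2)) y a b + gH0 (\<lambda>t1 t2. tens2 t1 t2) (sc x y) a b - gH0 (\<lambda>t1 t2. tens2 t1 (sc x t2)) y a b - gH0 (\<lambda>t1 t2. tens2 (sc x t1) t2) y a b + gH0 (\<lambda>t1 t2. tens2 t1 t2) (pr x y) a b + gH0 (\<lambda>t1 t2. tens2 t1 (sc y t2)) x a b + gH0 (\<lambda>t1 t2. tens2 (sc y t1) t2) x a b + tens2 b (AX3 x y a) - tens2 b (AX2 x y a) - tens2 b (AX1 x y a) - tens2 (AX1 x y b) a) = 0"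
    by (simp only: sum_simps AX1_zero AX2_zero AX3_zero tens3_zero1 tens3_zero2 tens3_zero3 tens2_zero1 tens2_zero2 smul_zero add_0_left add_0_right diff_0_right diff_self Rsum_neg minus_zero)
  show ?thesis using e1 e2 by (simp only:)
qed

lemma B5: "DS (ci x y) - map2 id (Rm ci y) (DS x) - (map2 id (Lm ci x) (DS y) + map2 (Lm od x) id (DS y)) + map2 (Lm od y) id (DS x + tau (DP x)) = 0"
proof -
  have e1: "DS (ci x y) - map2 id (Rm ci y) (DS x) - (map2 id (Lm ci x) (DS y) + map2 (Lm od x) id (DS y)) + map2 (Lm od y) id (DS x + tau (DP x)) = Rsum r (\<lambda>a b. 0 - gH0 (\<lambda>t1 t2. tens2 t1 (pr x t2)) y a b - gH0 (\<lambda>t1 t2. tens2 t1 (pr t2 y)) x a b + gH0 (\<lambda>t1 t2. tens2 t1 t2) (pr x y) a b + gH0 (\<lambda>t1 t2. tens2 (pr t1 y) t2) x a b + gH0 (\<lambda>t1 t2. tens2 (sc y t1) t2) x a b + gH0 (\<lambda>t1 t2. tens2 t1 t2) (sc x y) a b - gH0 (\<lambda>t1 t2. tens2 t1 (sc x t2)) y a b - gH0 (\<lambda>t1 t2. tens2 (pr t1 x) t2) y a b - gH0 (\<lambda>t1 t2. tens2 t1 (sc t2 y)) x a b - gH0 (\<lambda>t1 t2. tens2 (sc x t1) t2) y a b - tens2 b (AX2 a x y) - tens2 (AX1 x y b) a - tens2 (AX2 x b y) a - tens2 b (AX1 a x y) + tens2 b (AX3 a x y) - tens2 (AX3 b y x)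 a + tens2 (AX2 y b x) a)"
    apply (simp only: push_all)
    apply (intro Rsum_cong T2_ext)
    apply (simp add: tw_simps Lm_def Rm_def)
    by algebra
  have e2: "Rsum r (\<lambda>a b. 0 - gH0 (\<lambda>t1 t2. tens2 t1 (pr x t2)) y a b - gH0 (\<lambda>t1 t2. tens2 t1 (pr t2 y)) x a b + gH0 (\<lambda>t1 t2. tens2 t1 t2) (pr x y) a b + gH0 (\<lambda>t1 t2. tens2 (pr t1 y) t2) x a b + gH0 (\<lambda>t1 t2. tens2 (sc y t1) t2) x a b + gH0 (\<lambda>t1 t2. tens2 t1 t2) (sc x y) a b - gH0 (\<lambda>t1 t2. tens2 t1 (sc x t2)) y a b - gH0 (\<lambda>t1 t2. tens2 (pr t1 x) t2) y a b - gH0 (\<lambda>t1 t2. tens2 t1 (sc t2 y)) x a b - gH0 (\<lambda>t1 t2. tens2 (sc x t1) t2) y a b - tens2 b (AX2 a x y) - tens2 (AX1 x y b) a - tens2 (AX2 x b y) a - tens2 b (AX1 a x y) + tens2 b (AX3 a x y) - tens2 (AX3 b y x) a + tens2 (AX2 y b x) a) = 0"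
    by (simp only: sum_simps AX1_zero AX2_zero AX3_zero tens3_zero1 tens3_zero2 tens3_zero3 tens2_zero1 tens2_zero2 smul_zero add_0_left add_0_right diff_0_right diff_self Rsum_neg minus_zero)
  show ?thesis using e1 e2 by (simp only:)
qed

lemma B6: "map2 id (Rm ci y) (tau (DP x)) - map2 (Rm pr x) id (DS y) = 0"
proof -
  have e1: "map2 id (Rm ci y) (tau (DP x)) - map2 (Rm pr x) id (DS y) = Rsum r (\<lambda>a b. 0 - gH0 (\<lambda>t1 t2. tens2 (pr t1 x) t2) y a b - tens2 b (AX2 a x y) + tens2 b (AX3 x a y) - tens2 b (AX1 a x y) - tens2 b (AX1 x a y) + tens2 b (AX3 a x y) - tens2 b (AX2 x a y) - tens2 (AX3 b y x) a + tens2 (AX2 y b x) a)"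
    apply (simp only: push_all)
    apply (intro Rsum_cong T2_ext)
    apply (simp add: tw_simps Lm_def Rm_def)
    by algebra
  have e2: "Rsum r (\<lambda>a b. 0 - gH0 (\<lambda>t1 t2. tens2 (pr t1 x) t2) y a b - tens2 b (AX2 a x y) + tens2 b (AX3 x a y) - tens2 b (AX1 a x y) - tens2 b (AX1 x a y) + tens2 b (AX3 a x y) - tens2 b (AX2 x a y) - tens2 (AX3 b y x) a + tens2 (AX2 y b x) a) = 0"
    by (simp only: sum_simps AX1_zero AX2_zero AX3_zero tens3_zero1 tens3_zero2 tens3_zero3 tens2_zero1 tens2_zero2 smul_zero add_0_left add_0_right diff_0_right diff_self Rsum_neg minus_zero)
  show ?thesis using e1 e2 by (simp only:)
qed
end


theorem mainTheorem7:
  fixes sc pr :: "('i::finite \<Rightarrow> 'k::field) \<Rightarrow> ('i \<Rightarrow> 'k) \<Rightarrow> ('i \<Rightarrow> 'k)"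
    and r :: "'i \<times> 'i \<Rightarrow> 'k"
  assumes "LD_algebra sc pr"
    and "S_YB sc pr r = 0"
    and "invariant sc pr (r + tau r)"
  shows "LD_bialgebra sc pr (Delta_succ sc pr r) (Delta_prec sc pr r)"
proof -
  have b: "bilinear_op sc" "bilinear_op pr" using assms(1) unfolding LD_algebra_def by auto
  interpret L: LDR sc pr r
    by (intro LDR.intro LDA.intro LDR_axioms.intro b assms)
  show ?thesis
    unfolding LD_bialgebra_def Let_def L.Delta_succ_eq L.Delta_prec_eq
    by (intro conjI allI assms(1) L.DS_lin L.DP_lin L.C1 L.C2 L.C3 L.B1 L.B2 L.B3 L.B4 L.B5 L.B6)
qed

end
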